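(* Let $\rho>0$, $M\ge N$, $\hat P=\sum_{i=1}^{n_{\hat P}}\hat p_i\delta_{\hat\xi_i}$ on $X=\mathbb R^n$, $c(x,y)=\|x-y\|$ for a norm $\|\cdot\|$ on $\mathbb R^n$, and $\ell(x)=\min_{(a,b)\in\mathcal H}(a^\top x+b)$ for a polytope $\mathcal H\subseteq(\mathbb R^n)^N\times\mathbb R$. Then $U^{\mathrm{sym}}_M(\ell)$ equals the infimum of $$\mu M\rho+\sum_{\iota\in\hat{\mathcal I}}\hat p_\iota\sigma_\iota$$ over variables $\mu\ge0$, $\sigma_\iota\in\mathbb R$, $z_\iota=(z^j_\iota)_{j=1}^M\in(\mathbb R^n)^M$, $b_{l,\iota}\in\mathbb R$, $a_{l,\iota}\in(\mathbb R^n)^N$ ($l\in\mathcal L$, $\iota\in\hat{\mathcal I}$) subject to, for all $l\in\mathcal L$, $\iota\in\hat{\mathcal I}$, $j=1,\dots,M$: $$0\le\sigma_\iota+z_\iota^\top\hat\xi_{\upsilon(\iota)}+\tfrac{(M-N)!}{M!}\textstyle\sum_{l\in\mathcal L}b_{l,\iota},\quad \|z^j_\iota\|_*\le\mu,\quad z_\iota=\tfrac{(M-N)!}{M!}\textstyle\sum_{l\in\mathcal L}E_l^\top a_{l,\iota},\quad (a_{l,\iota},b_{l,\iota})\in-\mathcal H.$$ The optimal value does not depend on the choice of the selector $\upsilon$.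
   Context: $c^M(x,y)=\sum_{i\le M}c(x_i,y_i)$; $\mathbb B^{c^M}_{M\rho}(\hat P^{\otimes M})$ is the set of Borel probability measures on $(\mathbb R^n)^M$ with finite first moment and optimal transport cost $W_{c^M}(\cdot,\hat P^{\otimes M})\le M\rho$; $\mathrm{pr}^M_{1:N}$ projects onto the first $N$ blocks; $g_{\mathrm{sym}}=\frac1{M!}\sum_{\pi\in\mathcal S_M}g\circ\pi$ with $\pi(x)=(x_{\pi(1)},\dots,x_{\pi(M)})$; $U^{\mathrm{sym}}_M(\ell)=\sup_{\bar P\in\mathbb B^{c^M}_{M\rho}(\hat P^{\otimes M})}\mathbb E_{\bar P}(\ell\circ\mathrm{pr}^M_{1:N})_{\mathrm{sym}}$. $\mathcal L=\{l\in\{1,\dots,M\}^N: l_k\ne l_{k'}\text{ for }k\ne k'\}$; $E_l\in\mathbb R^{nN\times nM}$ is the selection matrix with $E_lx=(x_{l_1},\dots,x_{l_N})$. $\hat I=\{1,\dots,n_{\hat P}\}^M$; $\mathbf i\sim\mathbf j$ iff $\mathbf i_k=\mathbf j_{\pi(k)}$ for all $k$ for some $\pi\in\mathcal S_M$; $\hat{\mathcal I}=\hat I/\!\sim$; $\upsilon:\hat{\mathcal I}\to\hat I$ is any fixed map with $\upsilon(\iota)\in\iota$; $\hat\xi_{\mathbf i}=(\hat\xi_{\mathbf i_1},\dots,\hat\xi_{\mathbf i_M})$; $\hat p_\iota=\sum_{\mathbf i\in\iota}\prod_{k=1}^M\hat p_{\mathbf i_k}$. $\|\cdot\|_*$ is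 the dual norm; $z_\iota^\top\hat\xi$ is the Euclidean inner product on $(\mathbb R^n)^M$. *)

theory Defs
  imports "HOL-Analysis.Analysis" "HOL-Probability.Probability" "HOL-Combinatorics.Permutations"
begin

(* A point of (R^n)^K is represented as a function x :: nat \<Rightarrow> real^'n,
   extensional on the block index set {..<K} (0-based). *)
definition blocks :: "nat \<Rightarrow> (nat \<Rightarrow> 'b) set" where
  "blocks K = PiE {..<K} (\<lambda>_. UNIV)"

definition is_norm :: "(real^'n \<Rightarrow> real) \<Rightarrow> bool" where
  "is_norm nrm \<longleftrightarrow> (\<forall>x y. nrm (x + y) \<le> nrm x + nrm y)
      \<and> (\<forall>c x. nrm (c *\<^sub>R x) = \<bar>c\<bar> * nrm x)
      \<and> (\<forall>x. nrm x = 0 \<longleftrightarrow> x = 0)"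

definition dual_norm :: "(real^'n \<Rightarrow> real) \<Rightarrow> real^'n \<Rightarrow> real" where
  "dual_norm nrm z = (SUP x\<in>{x. nrm x \<le> 1}. z \<bullet> x)"

definition is_polytope :: "nat \<Rightarrow> ((nat \<Rightarrow> real^'n) \<times> real) set \<Rightarrow> bool" where
  "is_polytope N H \<longleftrightarrow> (\<exists>V. finite V \<and> V \<noteq> {} \<and> V \<subseteq> blocks N \<times> UNIV \<and>
     H = {((\<lambda>k. if k < N then (\<Sum>v\<in>V. w v *\<^sub>R fst v k) else undefined),
           (\<Sum>v\<in>V. w v * snd v)) | w. (\<forall>v\<in>V. 0 \<le> w v) \<and> (\<Sum>v\<in>V. w v) = 1})"

definition loss :: "nat \<Rightarrow> ((nat \<Rightarrow> real^'n) \<times> real) set \<Rightarrow> (nat \<Rightarrow> real^'n) \<Rightarrow> real" where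
  "loss N H x = (INF p\<in>H. (\<Sum>k<N. fst p k \<bullet> x k) + snd p)"

definition proj_first :: "nat \<Rightarrow> (nat \<Rightarrow> 'b) \<Rightarrow> nat \<Rightarrow> 'b" where
  "proj_first N x = restrict x {..<N}"

definition symmetrize :: "nat \<Rightarrow> ((nat \<Rightarrow> 'b) \<Rightarrow> real) \<Rightarrow> (nat \<Rightarrow> 'b) \<Rightarrow> real" where
  "symmetrize M g x = (1 / fact M) * (\<Sum>\<pi>\<in>{\<pi>. \<pi> permutes {..<M}}. g (restrict (\<lambda>k. x (\<pi> k)) {..<M}))"

definition blockspace :: "nat \<Rightarrow> (nat \<Rightarrow> real^'n) measure" where
  "blockspace M = PiM {..<M} (\<lambda>_. borel)"

definition discrete_measure :: "nat \<Rightarrow> (nat \<Rightarrow> real) \<Rightarrow> (nat \<Rightarrow> real^'n) \<Rightarrow> (real^'n) measure" where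
  "discrete_measure np p xi = measure_of UNIV (sets borel)
      (\<lambda>A. \<Sum>i\<in>{1..np}. ennreal (p i) * indicator A (xi i))"

definition costM :: "(real^'n \<Rightarrow> real) \<Rightarrow> nat \<Rightarrow> (nat \<Rightarrow> real^'n) \<Rightarrow> (nat \<Rightarrow> real^'n) \<Rightarrow> real" where
  "costM nrm M x y = (\<Sum>i<M. nrm (x i - y i))"

definition couplings :: "nat \<Rightarrow> (nat \<Rightarrow> real^'n) measure \<Rightarrow> (nat \<Rightarrow> real^'n) measure
     \<Rightarrow> ((nat \<Rightarrow> real^'n) \<times> (nat \<Rightarrow> real^'n)) measure set" where
  "couplings M P Q = {\<pi>. prob_space \<pi> \<and>
       sets \<pi> = sets (blockspace M \<Otimes>\<^sub>M blockspace M) \<and>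
       distr \<pi> (blockspace M) fst = P \<and> distr \<pi> (blockspace M) snd = Q}"

definition ot_cost :: "(real^'n \<Rightarrow> real) \<Rightarrow> nat \<Rightarrow> (nat \<Rightarrow> real^'n) measure \<Rightarrow> (nat \<Rightarrow> real^'n) measure \<Rightarrow> ennreal" where
  "ot_cost nrm M P Q = (INF \<pi>\<in>couplings M P Q. \<integral>\<^sup>+ xy. ennreal (costM nrm M (fst xy) (snd xy)) \<partial>\<pi>)"

definition finite_first_moment_probs :: "nat \<Rightarrow> (nat \<Rightarrow> real^'n) measure set" where
  "finite_first_moment_probs M = {P. prob_space P \<and> sets P = sets (blockspace M) \<and>
       (\<integral>\<^sup>+ x. ennreal (\<Sum>i<M. norm (x i)) \<partial>P) < \<infinity>}"

definition ot_ball :: "(real^'n \<Rightarrow> real) \<Rightarrow> nat \<Rightarrow> real \<Rightarrow> (nat \<Rightarrow> real^'n) measure \<Rightarrow> (nat \<Rightarrow> real^'n) measure set" where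
  "ot_ball nrm M r Q = {P \<in> finite_first_moment_probs M. ot_cost nrm M P Q \<le> ennreal r}"

definition U_sym :: "(real^'n \<Rightarrow> real) \<Rightarrow> nat \<Rightarrow> nat \<Rightarrow> real \<Rightarrow> nat \<Rightarrow> (nat \<Rightarrow> real) \<Rightarrow> (nat \<Rightarrow> real^'n)
      \<Rightarrow> ((nat \<Rightarrow> real^'n) \<Rightarrow> real) \<Rightarrow> ereal" where
  "U_sym nrm M N \<rho> np p xi l =
     (SUP P\<in>ot_ball nrm M (real M * \<rho>) (PiM {..<M} (\<lambda>_. discrete_measure np p xi)).
        ereal (\<integral>x. symmetrize M (\<lambda>y. l (proj_first N y)) x \<partial>P))"

definition Lset :: "nat \<Rightarrow> nat \<Rightarrow> (nat \<Rightarrow> nat) set" where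
  "Lset M N = {l \<in> PiE {..<N} (\<lambda>_. {..<M}). inj_on l {..<N}}"

(* E_l^T a : (R^n)^N \<rightarrow> (R^n)^M, the transpose of the selection E_l x = (x_{l_1},...,x_{l_N}) *)
definition selT :: "nat \<Rightarrow> nat \<Rightarrow> (nat \<Rightarrow> nat) \<Rightarrow> (nat \<Rightarrow> real^'n) \<Rightarrow> nat \<Rightarrow> real^'n" where
  "selT M N l a = (\<lambda>j. if j < M then (\<Sum>k\<in>{k. k < N \<and> l k = j}. a k) else undefined)"

definition Ihat :: "nat \<Rightarrow> nat \<Rightarrow> (nat \<Rightarrow> nat) set" where
  "Ihat M np = PiE {..<M} (\<lambda>_. {1..np})"

definition perm_equiv :: "nat \<Rightarrow> nat \<Rightarrow> ((nat \<Rightarrow> nat) \<times> (nat \<Rightarrow> nat)) set" where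
  "perm_equiv M np = {(i, j). i \<in> Ihat M np \<and> j \<in> Ihat M np \<and>
       (\<exists>\<pi>. \<pi> permutes {..<M} \<and> (\<forall>k<M. i k = j (\<pi> k)))}"

definition Icls :: "nat \<Rightarrow> nat \<Rightarrow> (nat \<Rightarrow> nat) set set" where
  "Icls M np = Ihat M np // perm_equiv M np"

definition p_cls :: "nat \<Rightarrow> (nat \<Rightarrow> real) \<Rightarrow> (nat \<Rightarrow> nat) set \<Rightarrow> real" where
  "p_cls M p \<iota> = (\<Sum>i\<in>\<iota>. \<Prod>k<M. p (i k))"

definition xi_tuple :: "nat \<Rightarrow> (nat \<Rightarrow> real^'n) \<Rightarrow> (nat \<Rightarrow> nat) \<Rightarrow> nat \<Rightarrow> real^'n" where
  "xi_tuple M xi i = restrict (\<lambda>k. xi (i k)) {..<M}"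

definition dual_values :: "(real^'n \<Rightarrow> real) \<Rightarrow> nat \<Rightarrow> nat \<Rightarrow> real \<Rightarrow> nat \<Rightarrow> (nat \<Rightarrow> real) \<Rightarrow> (nat \<Rightarrow> real^'n)
     \<Rightarrow> ((nat \<Rightarrow> real^'n) \<times> real) set \<Rightarrow> ((nat \<Rightarrow> nat) set \<Rightarrow> (nat \<Rightarrow> nat)) \<Rightarrow> ereal set" where
  "dual_values nrm M N \<rho> np p xi H \<upsilon> =
     {ereal (\<mu> * real M * \<rho> + (\<Sum>\<iota>\<in>Icls M np. p_cls M p \<iota> * \<sigma> \<iota>)) | \<mu> \<sigma> z a b.
        0 \<le> \<mu> \<and>
        (\<forall>\<iota>\<in>Icls M np.
           0 \<le> \<sigma> \<iota> + (\<Sum>j<M. z \<iota> j \<bullet> xi_tuple M xi (\<upsilon> \<iota>) j)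
                 + (fact (M - N) / fact M) * (\<Sum>l\<in>Lset M N. b l \<iota>)
         \<and> (\<forall>j<M. dual_norm nrm (z \<iota> j) \<le> \<mu>)
         \<and> z \<iota> = (\<lambda>j. if j < M then (fact (M - N) / fact M) *\<^sub>R (\<Sum>l\<in>Lset M N. selT M N l (a l \<iota>) j)
                       else undefined)
         \<and> (\<forall>l\<in>Lset M N. ((\<lambda>k. if k < N then - a l \<iota> k else undefined), - b l \<iota>) \<in> H))}"

end

theory Submission
  imports Defs
begin

definition ccvx :: "(real \<Rightarrow> 'a \<Rightarrow> 'a \<Rightarrow> 'a) \<Rightarrow> 'a set \<Rightarrow> bool" where
  "ccvx comb C \<longleftrightarrow> (\<forall>a\<in>C. \<forall>b\<in>C. \<forall>t\<in>{0..1}. comb t a b \<in> C)"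

lemma ccvx_connected:
  fixes comb :: "real \<Rightarrow> 'a::topological_space \<Rightarrow> 'a \<Rightarrow> 'a"
  assumes "ccvx comb C"
    and "\<And>a b. continuous_on {0..1} (\<lambda>t. comb t a b)"
    and "\<And>a b. comb 0 a b = a" and "\<And>a b. comb 1 a b = b"
  shows "connected C"
proof -
  have "path_connected C"
    unfolding path_connected_def
  proof (intro ballI)
    fix a b assume ab: "a \<in> C" "b \<in> C"
    show "\<exists>g. path g \<and> path_image g \<subseteq> C \<and> pathstart g = a \<and> pathfinish g = b"
      apply (rule exI[of _ "\<lambda>t. comb t a b"])
      using assms ab unfolding path_def path_image_def pathstart_def pathfinish_def ccvx_def
      by auto
  qed
  then show ?thesis by (rule path_connected_imp_connected)
qed

locale sion_setting =
  fixes comb :: "real \<Rightarrow> 'a::topological_space \<Rightarrow> 'a \<Rightarrow> 'a"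
    and combY :: "real \<Rightarrow> 'b \<Rightarrow> 'b \<Rightarrow> 'b"
    and f :: "'a \<Rightarrow> 'b \<Rightarrow> real"
  assumes comb_cont: "\<And>a b. continuous_on {0..1} (\<lambda>t. comb t a b)"
    and comb0: "\<And>a b. comb 0 a b = a" and comb1: "\<And>a b. comb 1 a b = b"
    and combY0: "\<And>a b. combY 0 a b = a" and combY1: "\<And>a b. combY 1 a b = b"
    and f_cont: "\<And>y. continuous_on UNIV (\<lambda>x. f x y)"
    and f_qcvx: "\<And>y a b t. t \<in> {0..1} \<Longrightarrow> f (comb t a b) y \<le> max (f a y) (f b y)"
    and f_contY: "\<And>x y1 y2. continuous_on {0..1} (\<lambda>t. f x (combY t y1 y2))"
    and f_qccv: "\<And>x y1 y2 t. t \<in> {0..1} \<Longrightarrow> min (f x y1) (f x y2) \<le> f x (combY t y1 y2)"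
begin

lemma sub_ccvx:
  assumes "ccvx comb K" shows "ccvx comb {x\<in>K. f x y \<le> \<beta>}"
  using assms f_qcvx unfolding ccvx_def by (auto intro: order.trans[OF f_qcvx])

lemma closed_sub: "closed {x. f x y \<le> \<beta>}"
  by (rule closed_Collect_le[OF f_cont continuous_on_const])

lemma komiya1:
  assumes K: "compact K" "ccvx comb K"
    and hyp: "\<forall>x\<in>K. \<alpha> < max (f x y1) (f x y2)"
  shows "\<exists>y0. \<forall>x\<in>K. \<alpha> < f x y0"
proof (cases "K = {}")
  case True then show ?thesis by auto
next
  case False
  have gc: "continuous_on K (\<lambda>x. max (f x y1) (f x y2))"
    by (intro continuous_intros continuous_on_subset[OF f_cont]) auto
  obtain x0 where x0: "x0 \<in> K" "\<forall>x\<in>K. max (f x0 y1) (f x0 y2) \<le> max (f x y1) (f x y2)"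
    using continuous_attains_inf[OF K(1) False gc] by blast
  define m where "m = max (f x0 y1) (f x0 y2)"
  have am: "\<alpha> < m" using hyp x0 m_def by auto
  define \<beta> where "\<beta> = (\<alpha> + m) / 2"
  have ab: "\<alpha> < \<beta>" "\<beta> < m" using am \<beta>_def by auto
  show ?thesis
  proof (rule ccontr)
    assume "\<not> ?thesis"
    then have ctr: "\<forall>y0. \<exists>x\<in>K. f x y0 \<le> \<alpha>" by (auto simp: not_less)
    define z where "z t = combY t y1 y2" for t
    define C where "C t = {x\<in>K. f x (z t) \<le> \<beta>}" for t
    define A1 where "A1 = {x. f x y1 \<le> \<beta>}"
    define A2 where "A2 = {x. f x y2 \<le> \<beta>}"
    have cA1: "closed A1" and cA2: "closed A2" unfolding A1_def A2_def by (rule closed_sub)+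
    have disj: "x \<in> K \<Longrightarrow> x \<in> A1 \<Longrightarrow> x \<in> A2 \<Longrightarrow> False" for x
      using x0(2) ab unfolding A1_def A2_def m_def by fastforce
    have Ccov: "C t \<subseteq> A1 \<union> A2" if "t \<in> {0..1}" for t
    proof
      fix x assume "x \<in> C t"
      then have "f x (combY t y1 y2) \<le> \<beta>" unfolding C_def z_def by auto
      moreover have "min (f x y1) (f x y2) \<le> f x (combY t y1 y2)" using f_qccv[OF that] .
      ultimately show "x \<in> A1 \<union> A2" unfolding A1_def A2_def by (auto simp: min_def split: if_splits)
    qed
    have Cconn: "connected (C t)" for t
      unfolding C_def using ccvx_connected[OF sub_ccvx[OF K(2)] comb_cont comb0 comb1] by blast
    have Cne: "\<exists>x\<in>K. f x (z t) \<le> \<alpha>" for t using ctr by blast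
    have Cside: "C t \<subseteq> A1 \<or> C t \<subseteq> A2" if "t \<in> {0..1}" for t
    proof (rule ccontr)
      assume "\<not> (C t \<subseteq> A1 \<or> C t \<subseteq> A2)"
      then have "A1 \<inter> C t \<noteq> {}" "A2 \<inter> C t \<noteq> {}" using Ccov[OF that] by auto
      moreover have "A1 \<inter> A2 \<inter> C t = {}" using disj unfolding C_def by blast
      ultimately show False
        using Cconn[of t] Ccov[OF that] cA1 cA2 unfolding connected_closed by blast
    qed
    define T1 where "T1 = {t\<in>{0..1}. C t \<subseteq> A1}"
    define T2 where "T2 = {t\<in>{0..1}. C t \<subseteq> A2}"
    have opn: "openin (top_of_set {0..1}) {t\<in>{0..1}. C t \<subseteq> A}"
      if AA: "A = A1 \<or> A = A2" for A
      unfolding openin_euclidean_subtopology_iff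
    proof (intro conjI ballI)
      show "{t \<in> {0..1}. C t \<subseteq> A} \<subseteq> {0..1}" by auto
      fix t assume t: "t \<in> {t \<in> {0..1}. C t \<subseteq> A}"
      obtain x where x: "x \<in> K" "f x (z t) \<le> \<alpha>" using Cne by blast
      have xA: "x \<in> A" using t x ab unfolding C_def by auto
      have cz: "continuous_on {0..1} (\<lambda>s. f x (z s))" unfolding z_def by (rule f_contY)
      obtain d where d: "d > 0" "\<forall>s\<in>{0..1}. dist s t < d \<longrightarrow> dist (f x (z s)) (f x (z t)) < \<beta> - \<alpha>"
        using cz t ab unfolding continuous_on_iff by (metis (no_types, lifting) diff_gt_0_iff_gt mem_Collect_eq)
      show "\<exists>e>0. \<forall>x'\<in>{0..1}. dist x' t < e \<longrightarrow> x' \<in> {t \<in> {0..1}. C t \<subseteq> A}"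
      proof (intro exI[of _ d] conjI ballI impI)
        fix s assume s: "s \<in> {0..1::real}" "dist s t < d"
        have "f x (z s) < \<beta>" using d s x by (auto simp: dist_real_def)
        then have xs: "x \<in> C s" using x unfolding C_def by auto
        have "C s \<subseteq> A"
        proof -
          from Cside[OF s(1)] show ?thesis
            using xs xA AA disj x by blast
        qed
        then show "s \<in> {t \<in> {0..1}. C t \<subseteq> A}" using s by auto
      qed (use d in auto)
    qed
    have o1: "openin (top_of_set {0..1}) T1" unfolding T1_def by (rule opn) simp
    have o2: "openin (top_of_set {0..1}) T2" unfolding T2_def by (rule opn) simp
    have cov: "{0..1} \<subseteq> T1 \<union> T2" using Cside unfolding T1_def T2_def by blast
    have dj: "T1 \<inter> T2 = {}"
    proof -
      { fix t assume "t \<in> T1" "t \<in> T2"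
        then have t: "t \<in> {0..1}" "C t \<subseteq> A1" "C t \<subseteq> A2" unfolding T1_def T2_def by auto
        obtain x where x: "x \<in> K" "f x (z t) \<le> \<alpha>" using Cne by blast
        then have "x \<in> C t" using ab unfolding C_def by auto
        then have False using t disj x by blast }
      then show ?thesis by auto
    qed
    have n1: "T1 \<noteq> {}"
    proof -
      have "C 0 \<subseteq> A1" unfolding C_def A1_def z_def combY0 by auto
      then have "0 \<in> T1" unfolding T1_def by auto
      then show ?thesis by auto
    qed
    have n2: "T2 \<noteq> {}"
    proof -
      have "C 1 \<subseteq> A2" unfolding C_def A2_def z_def combY1 by auto
      then have "1 \<in> T2" unfolding T2_def by auto
      then show ?thesis by auto
    qed
    have "connected {0..1::real}" by simp
    then show False using o1 o2 cov dj n1 n2 unfolding connected_openin by blast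
  qed
qed

lemma komiya2:
  assumes "finite Y"
  shows "compact K \<Longrightarrow> ccvx comb K \<Longrightarrow> (\<forall>x\<in>K. \<exists>y\<in>Y. \<alpha> < f x y) \<Longrightarrow> \<exists>y0. \<forall>x\<in>K. \<alpha> < f x y0"
  using assms
proof (induction Y arbitrary: K rule: finite_induct)
  case empty
  then show ?case by auto
next
  case (insert y Y K)
  define K' where "K' = {x\<in>K. f x y \<le> \<alpha>}"
  have K'eq: "K' = K \<inter> {x. f x y \<le> \<alpha>}" unfolding K'_def by auto
  have cK': "compact K'" unfolding K'eq by (rule compact_Int_closed[OF insert(4) closed_sub])
  have vK': "ccvx comb K'" unfolding K'_def by (rule sub_ccvx[OF insert(5)])
  have hK': "\<forall>x\<in>K'. \<exists>y\<in>Y. \<alpha> < f x y" using insert(6) unfolding K'_def by force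
  obtain y' where y': "\<forall>x\<in>K'. \<alpha> < f x y'" using insert(3)[OF cK' vK' hK'] by blast
  have "\<forall>x\<in>K. \<alpha> < max (f x y') (f x y)"
    using y' unfolding K'_def by force
  then show ?case by (rule komiya1[OF insert(4,5)])
qed

theorem sion:
  assumes K: "compact K" "ccvx comb K"
    and hyp: "\<forall>y. \<exists>x\<in>K. f x y \<le> \<psi>"
  shows "\<exists>x\<in>K. \<forall>y. f x y \<le> \<psi>"
proof -
  have "K \<inter> \<Inter> ((\<lambda>y. {x. f x y \<le> \<psi>}) ` UNIV) \<noteq> {}"
  proof (rule compact_imp_fip_image[OF K(1)])
    show "closed {x. f x i \<le> \<psi>}" for i by (rule closed_sub)
    fix Y :: "'b set" assume Y: "finite Y" "Y \<subseteq> UNIV"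
    show "K \<inter> \<Inter> ((\<lambda>y. {x. f x y \<le> \<psi>}) ` Y) \<noteq> {}"
    proof
      assume "K \<inter> \<Inter> ((\<lambda>y. {x. f x y \<le> \<psi>}) ` Y) = {}"
      then have "\<forall>x\<in>K. \<exists>y\<in>Y. \<psi> < f x y" by (fastforce simp: not_le)
      then obtain y0 where "\<forall>x\<in>K. \<psi> < f x y0" using komiya2[OF Y(1) K] by blast
      then show False using hyp by (meson not_le)
    qed
  qed
  then show ?thesis by auto
qed

end

context
  fixes nrm :: "real^'n \<Rightarrow> real"
  assumes N: "is_norm nrm"
begin

lemma nrm_tri: "nrm (x + y) \<le> nrm x + nrm y" using N unfolding is_norm_def by blast
lemma nrm_scale: "nrm (c *\<^sub>R x) = \<bar>c\<bar> * nrm x" using N unfolding is_norm_def by blast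
lemma nrm_zero_iff: "nrm x = 0 \<longleftrightarrow> x = 0" using N unfolding is_norm_def by blast
lemma nrm_0[simp]: "nrm 0 = 0" using nrm_zero_iff by simp
lemma nrm_minus: "nrm (- x) = nrm x" using nrm_scale[of "-1" x] by simp
lemma nrm_nonneg: "0 \<le> nrm x"
proof -
  have "nrm (x + - x) \<le> nrm x + nrm (- x)" by (rule nrm_tri)
  then show ?thesis by (simp add: nrm_minus)
qed
lemma nrm_diff_tri: "nrm (x - z) \<le> nrm (x - y) + nrm (y - z)"
  using nrm_tri[of "x - y" "y - z"] by simp
lemma nrm_sub: "nrm (x - y) = nrm (y - x)"
  using nrm_minus[of "x - y"] by simp

lemma nrm_sum: "nrm (\<Sum>i\<in>S. f i) \<le> (\<Sum>i\<in>S. nrm (f i))"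
proof (induction S rule: infinite_finite_induct)
  case (insert x F)
  then show ?case using nrm_tri[of "f x" "sum f F"] by simp
qed auto

lemma nrm_upper: "nrm x \<le> (\<Sum>b\<in>Basis. nrm b) * norm x"
proof -
  have "nrm x = nrm (\<Sum>b\<in>Basis. (x \<bullet> b) *\<^sub>R b)" by (simp add: euclidean_representation)
  also have "\<dots> \<le> (\<Sum>b\<in>Basis. nrm ((x \<bullet> b) *\<^sub>R b))" by (rule nrm_sum)
  also have "\<dots> = (\<Sum>b\<in>Basis. \<bar>x \<bullet> b\<bar> * nrm b)" by (simp add: nrm_scale)
  also have "\<dots> \<le> (\<Sum>b\<in>Basis. norm x * nrm b)"
    by (intro sum_mono mult_right_mono Basis_le_norm nrm_nonneg)
  finally show ?thesis by (simp add: sum_distrib_left mult.commute)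
qed

lemma nrm_lipschitz: "\<bar>nrm x - nrm y\<bar> \<le> (\<Sum>b\<in>Basis. nrm b) * norm (x - y)"
proof -
  have "nrm x \<le> nrm y + nrm (x - y)" using nrm_tri[of y "x - y"] by simp
  moreover have "nrm y \<le> nrm x + nrm (x - y)" using nrm_tri[of x "y - x"] nrm_sub[of y x] by simp
  ultimately have "\<bar>nrm x - nrm y\<bar> \<le> nrm (x - y)" by linarith
  then show ?thesis using nrm_upper[of "x - y"] by linarith
qed

lemma nrm_cont: "continuous_on UNIV nrm"
proof -
  define C where "C = (\<Sum>b\<in>Basis. nrm (b::real^'n)) + 1"
  have C: "C > 0" unfolding C_def using nrm_nonneg by (simp add: add_nonneg_pos sum_nonneg)
  have "\<bar>nrm x - nrm y\<bar> \<le> C * norm (x - y)" for x y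
    using nrm_lipschitz[of x y] unfolding C_def by (smt (verit) mult_right_mono norm_ge_zero)
  then show ?thesis unfolding continuous_on_iff
    apply (intro ballI allI impI)
    subgoal for x e
      apply (rule exI[of _ "e / C"])
      using C by (auto simp: dist_real_def dist_norm field_simps intro: le_less_trans)
    done
qed

lemma nrm_cont': "continuous_on S (\<lambda>x. nrm (f x))" if "continuous_on S f"
  using continuous_on_compose[OF that continuous_on_subset[OF nrm_cont]] by (auto simp: o_def)

lemma nrm_lower: "\<exists>c>0. \<forall>x. c * norm x \<le> nrm x"
proof -
  have ne: "sphere (0::real^'n) 1 \<noteq> {}" by (simp add: sphere_eq_empty)
  obtain x0 where x0: "x0 \<in> sphere 0 1" "\<forall>y\<in>sphere 0 1. nrm x0 \<le> nrm y"
    using continuous_attains_inf[OF compact_sphere ne continuous_on_subset[OF nrm_cont]] by blast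
  have "x0 \<noteq> 0" using x0 by auto
  then have pos: "nrm x0 > 0" using nrm_nonneg nrm_zero_iff by (metis order_le_less)
  show ?thesis
  proof (intro exI[of _ "nrm x0"] conjI allI pos)
    fix x :: "real^'n"
    show "nrm x0 * norm x \<le> nrm x"
    proof (cases "x = 0")
      case False
      then have "(1 / norm x) *\<^sub>R x \<in> sphere 0 1" by simp
      then have "nrm x0 \<le> nrm ((1 / norm x) *\<^sub>R x)" using x0 by blast
      also have "\<dots> = nrm x / norm x" by (simp add: nrm_scale)
      finally show ?thesis using False by (simp add: field_simps)
    qed simp
  qed
qed

lemma dual_bdd: "bdd_above ((\<lambda>x. z \<bullet> x) ` {x. nrm x \<le> 1})"
proof -
  obtain c where c: "c > 0" "\<forall>x. c * norm x \<le> nrm x" using nrm_lower by blast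
  have "z \<bullet> x \<le> norm z / c" if "nrm x \<le> 1" for x
  proof -
    have "z \<bullet> x \<le> norm z * norm x" by (metis Cauchy_Schwarz_ineq2 abs_le_D1)
    also have "\<dots> \<le> norm z * (1 / c)"
      using c that by (intro mult_left_mono) (auto simp: field_simps intro: order.trans)
    finally show ?thesis by simp
  qed
  then show ?thesis unfolding bdd_above_def by blast
qed

lemma dual_upper: "nrm x \<le> 1 \<Longrightarrow> z \<bullet> x \<le> dual_norm nrm z"
  unfolding dual_norm_def by (rule cSUP_upper[OF _ dual_bdd]) simp

lemma dual_ineq: "z \<bullet> x \<le> dual_norm nrm z * nrm x"
proof (cases "x = 0")
  case False
  then have p: "nrm x > 0" using nrm_nonneg nrm_zero_iff by (metis order_le_less)
  have "nrm ((1 / nrm x) *\<^sub>R x) \<le> 1" using p by (simp add: nrm_scale)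
  then have "z \<bullet> ((1 / nrm x) *\<^sub>R x) \<le> dual_norm nrm z" by (rule dual_upper)
  then show ?thesis using p by (simp add: field_simps)
next
  case True
  have "0 \<le> dual_norm nrm z" using dual_upper[of 0 z] by simp
  then show ?thesis using True by simp
qed

lemma dual_minus: "dual_norm nrm (- z) = dual_norm nrm z"
proof -
  have "(\<lambda>x. - z \<bullet> x) ` {x. nrm x \<le> 1} = (\<lambda>x. z \<bullet> x) ` {x. nrm x \<le> 1}"
  proof (rule set_eqI, rule iffI)
    fix y assume "y \<in> (\<lambda>x. - z \<bullet> x) ` {x. nrm x \<le> 1}"
    then obtain x where "nrm x \<le> 1" "y = - z \<bullet> x" by auto
    then show "y \<in> (\<lambda>x. z \<bullet> x) ` {x. nrm x \<le> 1}"
      by (intro image_eqI[of _ _ "- x"]) (auto simp: nrm_minus)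
  next
    fix y assume "y \<in> (\<lambda>x. z \<bullet> x) ` {x. nrm x \<le> 1}"
    then obtain x where "nrm x \<le> 1" "y = z \<bullet> x" by auto
    then show "y \<in> (\<lambda>x. - z \<bullet> x) ` {x. nrm x \<le> 1}"
      by (intro image_eqI[of _ _ "- x"]) (auto simp: nrm_minus)
  qed
  then show ?thesis unfolding dual_norm_def by simp
qed

lemma dual_gt: "dual_norm nrm z > \<mu> \<Longrightarrow> \<exists>x. nrm x \<le> 1 \<and> z \<bullet> x > \<mu>"
  unfolding dual_norm_def using less_cSUP_iff[OF _ dual_bdd, of "\<mu>" z]
  by (metis (no_types, lifting) empty_iff mem_Collect_eq nrm_0 zero_le_one)

end

definition lin :: "nat \<Rightarrow> ((nat \<Rightarrow> real^'n) \<times> real) \<Rightarrow> (nat \<Rightarrow> real^'n) \<Rightarrow> real" where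
  "lin N p y = (\<Sum>k<N. fst p k \<bullet> y k) + snd p"

definition hw :: "nat \<Rightarrow> ((nat \<Rightarrow> real^'n) \<times> real) set \<Rightarrow> (((nat \<Rightarrow> real^'n) \<times> real) \<Rightarrow> real) \<Rightarrow> (nat \<Rightarrow> real^'n) \<times> real" where
  "hw N V w = ((\<lambda>k. if k < N then (\<Sum>v\<in>V. w v *\<^sub>R fst v k) else undefined), (\<Sum>v\<in>V. w v * snd v))"

lemma lin_hw: "finite V \<Longrightarrow> (\<Sum>v\<in>V. w v) = 1 \<Longrightarrow> lin N (hw N V w) y = (\<Sum>v\<in>V. w v * lin N v y)"
proof -
  assume fin: "finite V" and s1: "(\<Sum>v\<in>V. w v) = 1"
  have "lin N (hw N V w) y = (\<Sum>k<N. (\<Sum>v\<in>V. w v *\<^sub>R fst v k) \<bullet> y k) + (\<Sum>v\<in>V. w v * snd v)"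
    unfolding lin_def hw_def by simp
  also have "\<dots> = (\<Sum>k<N. \<Sum>v\<in>V. w v * (fst v k \<bullet> y k)) + (\<Sum>v\<in>V. w v * snd v)"
    by (simp add: inner_sum_left)
  also have "\<dots> = (\<Sum>v\<in>V. w v * lin N v y)"
    unfolding lin_def by (simp add: sum.swap[of _ "{..<N}"] distrib_left sum.distrib sum_distrib_left)
  finally show ?thesis .
qed

lemma lin_affine: "lin N p (\<lambda>k. (1 - t) *\<^sub>R y1 k + t *\<^sub>R y2 k) = (1 - t) * lin N p y1 + t * lin N p y2"
proof -
  have "(\<Sum>k<N. fst p k \<bullet> ((1 - t) *\<^sub>R y1 k + t *\<^sub>R y2 k)) = (1 - t) * (\<Sum>k<N. fst p k \<bullet> y1 k) + t * (\<Sum>k<N. fst p k \<bullet> y2 k)"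
    by (simp add: inner_add_right sum.distrib sum_distrib_left)
  then show ?thesis unfolding lin_def by (simp add: algebra_simps)
qed

context
  fixes N :: nat and H :: "((nat \<Rightarrow> real^'n) \<times> real) set" and V
  assumes V: "finite V" "V \<noteq> {}" "V \<subseteq> blocks N \<times> UNIV"
    and HV: "H = {((\<lambda>k. if k < N then (\<Sum>v\<in>V. w v *\<^sub>R fst v k) else undefined),
           (\<Sum>v\<in>V. w v * snd v)) | w. (\<forall>v\<in>V. 0 \<le> w v) \<and> (\<Sum>v\<in>V. w v) = 1}"
begin

lemma H_hw: "H = {hw N V w | w. (\<forall>v\<in>V. 0 \<le> w v) \<and> (\<Sum>v\<in>V. w v) = 1}"
  unfolding HV hw_def by simp

lemma hw_in_H: "(\<forall>v\<in>V. 0 \<le> w v) \<Longrightarrow> (\<Sum>v\<in>V. w v) = 1 \<Longrightarrow> hw N V w \<in> H"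
  unfolding H_hw by blast

lemma V_sub_H: "v \<in> V \<Longrightarrow> v \<in> H"
proof -
  assume v: "v \<in> V"
  define w where "w u = (if u = v then 1 else (0::real))" for u
  have "hw N V w = v"
  proof -
    have fv: "fst v \<in> blocks N" using V(3) v by auto
    have "(\<lambda>k. if k < N then (\<Sum>u\<in>V. w u *\<^sub>R fst u k) else undefined) = fst v"
    proof
      fix k show "(if k < N then (\<Sum>u\<in>V. w u *\<^sub>R fst u k) else undefined) = fst v k"
        using fv v V(1) unfolding w_def blocks_def by (auto simp: if_distrib[of "\<lambda>x. x *\<^sub>R _"] sum.delta' PiE_def extensional_def cong: if_cong)
    qed
    moreover have "(\<Sum>u\<in>V. w u * snd u) = snd v" using v V(1) unfolding w_def by (simp add: if_distrib[of "\<lambda>x. x * _"] sum.delta' cong: if_cong)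
    ultimately show ?thesis unfolding hw_def by (simp add: prod_eq_iff)
  qed
  moreover have "(\<forall>u\<in>V. 0 \<le> w u)" "(\<Sum>u\<in>V. w u) = 1" using v V(1) unfolding w_def by (auto simp: sum.delta')
  ultimately show ?thesis using hw_in_H by metis
qed

lemma lin_H_ge: "h \<in> H \<Longrightarrow> Min ((\<lambda>v. lin N v y) ` V) \<le> lin N h y"
proof -
  assume "h \<in> H"
  then obtain w where w: "\<forall>v\<in>V. 0 \<le> w v" "(\<Sum>v\<in>V. w v) = 1" "h = hw N V w" unfolding H_hw by blast
  have "Min ((\<lambda>v. lin N v y) ` V) = (\<Sum>v\<in>V. w v * Min ((\<lambda>v. lin N v y) ` V))"
    using w(2) by (simp add: sum_distrib_right[symmetric])
  also have "\<dots> \<le> (\<Sum>v\<in>V. w v * lin N v y)"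
    using V(1) w(1) by (intro sum_mono mult_left_mono) auto
  also have "\<dots> = lin N h y" using lin_hw[OF V(1) w(2)] w(3) by simp
  finally show ?thesis .
qed

lemma loss_Min: "loss N H y = Min ((\<lambda>v. lin N v y) ` V)"
proof -
  have eq: "loss N H y = (INF h\<in>H. lin N h y)" unfolding loss_def lin_def by simp
  obtain v0 where v0: "v0 \<in> V" "lin N v0 y = Min ((\<lambda>v. lin N v y) ` V)"
    using V(1,2) by (metis (no_types, lifting) Min_in empty_is_image finite_imageI imageE)
  have "(INF h\<in>H. lin N h y) = Min ((\<lambda>v. lin N v y) ` V)"
  proof (rule antisym)
    show "(INF h\<in>H. lin N h y) \<le> Min ((\<lambda>v. lin N v y) ` V)"
      using v0 V_sub_H[OF v0(1)] by (metis (no_types, lifting) cINF_lower bdd_below.I2 lin_H_ge)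
    show "Min ((\<lambda>v. lin N v y) ` V) \<le> (INF h\<in>H. lin N h y)"
      using V_sub_H[OF v0(1)] by (intro cINF_greatest lin_H_ge) auto
  qed
  then show ?thesis using eq by simp
qed

lemma loss_le: "h \<in> H \<Longrightarrow> loss N H y \<le> lin N h y"
  using loss_Min lin_H_ge by simp

lemma loss_attained: "\<exists>v\<in>V. loss N H y = lin N v y"
  using V(1,2) loss_Min by (metis (no_types, lifting) Min_in empty_is_image finite_imageI imageE)

lemma loss_concave: "(1 - t) * loss N H y1 + t * loss N H y2 \<le> loss N H (\<lambda>k. (1 - t) *\<^sub>R y1 k + t *\<^sub>R y2 k)"
  if "0 \<le> t" "t \<le> 1"
proof -
  obtain v where v: "v \<in> V" "loss N H (\<lambda>k. (1 - t) *\<^sub>R y1 k + t *\<^sub>R y2 k) = lin N v (\<lambda>k. (1 - t) *\<^sub>R y1 k + t *\<^sub>R y2 k)"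
    using loss_attained by blast
  have "loss N H y1 \<le> lin N v y1" "loss N H y2 \<le> lin N v y2" using loss_le V_sub_H v by auto
  then have "(1 - t) * loss N H y1 + t * loss N H y2 \<le> (1 - t) * lin N v y1 + t * lin N v y2"
    using that by (intro add_mono mult_left_mono) auto
  then show ?thesis using v lin_affine by metis
qed

lemma loss_bound: "\<exists>A B. \<forall>y. \<bar>loss N H y\<bar> \<le> A + B * (\<Sum>k<N. norm (y k))"
proof -
  define A where "A = (\<Sum>v\<in>V. \<bar>snd v\<bar>)"
  define B where "B = (\<Sum>v\<in>V. \<Sum>k<N. norm (fst v k))"
  have lb: "\<bar>lin N v y\<bar> \<le> A + B * (\<Sum>k<N. norm (y k))" if v: "v \<in> V" for v y
  proof -
    have "\<bar>lin N v y\<bar> \<le> (\<Sum>k<N. \<bar>fst v k \<bullet> y k\<bar>) + \<bar>snd v\<bar>"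
      unfolding lin_def by (rule order.trans[OF abs_triangle_ineq add_right_mono[OF sum_abs]])
    also have "\<dots> \<le> (\<Sum>k<N. norm (fst v k) * norm (y k)) + \<bar>snd v\<bar>"
      by (intro add_right_mono sum_mono Cauchy_Schwarz_ineq2)
    also have "\<dots> \<le> (\<Sum>k<N. (\<Sum>k<N. norm (fst v k)) * norm (y k)) + \<bar>snd v\<bar>"
      by (intro add_right_mono sum_mono mult_right_mono member_le_sum) auto
    also have "\<dots> \<le> B * (\<Sum>k<N. norm (y k)) + A"
    proof (intro add_mono)
      have "(\<Sum>k<N. norm (fst v k)) \<le> B" unfolding B_def
        using v V(1) by (intro member_le_sum[where f="\<lambda>v. \<Sum>k<N. norm (fst v k)"]) (auto simp: sum_nonneg)
      then show "(\<Sum>k<N. (\<Sum>k<N. norm (fst v k)) * norm (y k)) \<le> B * (\<Sum>k<N. norm (y k))"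
        by (simp add: sum_distrib_left[symmetric] mult_right_mono sum_nonneg)
      show "\<bar>snd v\<bar> \<le> A" unfolding A_def using v V(1)
        by (intro member_le_sum[where f="\<lambda>v. \<bar>snd v\<bar>"]) auto
    qed
    finally show ?thesis by simp
  qed
  show ?thesis
  proof (intro exI allI)
    fix y obtain v where "v \<in> V" "loss N H y = lin N v y" using loss_attained by blast
    then show "\<bar>loss N H y\<bar> \<le> A + B * (\<Sum>k<N. norm (y k))" using lb by simp
  qed
qed

end

lemma finite_perms: "finite {\<pi>. \<pi> permutes {..<(M::nat)}}"
  by (rule finite_permutations) simp

lemma finite_Lset: "finite (Lset M N)"
  unfolding Lset_def by (rule finite_subset[OF _ finite_PiE[of "{..<N}" "\<lambda>_. {..<M}"]]) auto

lemma perm_restrict_in_L: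
  assumes "\<pi> permutes {..<M}" "N \<le> M"
  shows "restrict \<pi> {..<N} \<in> Lset M N"
proof -
  have "\<pi> k < M" if "k < N" for k using permutes_in_image[OF assms(1)] that assms(2) by auto
  moreover have "inj_on \<pi> {..<N}" using permutes_inj[OF assms(1)] by (simp add: inj_on_def inj_def)
  ultimately show ?thesis unfolding Lset_def by (auto simp: inj_on_def)
qed

lemma extend_perm:
  assumes l: "l \<in> Lset M N" and NM: "N \<le> M"
  shows "\<exists>\<sigma>. \<sigma> permutes {..<M} \<and> (\<forall>k<N. \<sigma> k = l k)"
proof -
  have lP: "l \<in> PiE {..<N} (\<lambda>_. {..<M})" and li: "inj_on l {..<N}" using l unfolding Lset_def by auto
  have lim: "l ` {..<N} \<subseteq> {..<M}" using lP by (auto simp: PiE_def Pi_def)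
  define B where "B = {..<M} - l ` {..<N}"
  have cB: "card B = card {N..<M}" unfolding B_def
    using card_Diff_subset[OF finite_imageI lim] card_image[OF li] by simp
  obtain g where g: "bij_betw g {N..<M} B" using finite_same_card_bij[of "{N..<M}" B] cB unfolding B_def by auto
  define \<sigma> where "\<sigma> k = (if k < N then l k else if k < M then g k else k)" for k
  have b1: "bij_betw \<sigma> {..<N} (l ` {..<N})"
    using li unfolding \<sigma>_def bij_betw_def inj_on_def by (auto simp: image_def)
  have b2: "bij_betw \<sigma> {N..<M} B"
    using g unfolding \<sigma>_def by (rule bij_betw_cong[THEN iffD1, rotated]) auto
  have "bij_betw \<sigma> ({..<N} \<union> {N..<M}) (l ` {..<N} \<union> B)"
    by (rule bij_betw_combine[OF b1 b2]) (auto simp: B_def)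
  moreover have "{..<N} \<union> {N..<M} = {..<M}" using NM by auto
  moreover have "l ` {..<N} \<union> B = {..<M}" using lim unfolding B_def by auto
  ultimately have "bij_betw \<sigma> {..<M} {..<M}" by simp
  then have "\<sigma> permutes {..<M}" by (rule bij_imp_permutes) (use NM in \<open>auto simp: \<sigma>_def\<close>)
  then show ?thesis unfolding \<sigma>_def by auto
qed

lemma fibre_card:
  assumes l: "l \<in> Lset M N" and NM: "N \<le> M"
  shows "card {\<pi>. \<pi> permutes {..<M} \<and> restrict \<pi> {..<N} = l} = fact (M - N)"
proof -
  obtain \<sigma> where \<sigma>: "\<sigma> permutes {..<M}" "\<forall>k<N. \<sigma> k = l k" using extend_perm[OF l NM] by blast
  have lext: "l k = undefined" if "\<not> k < N" for k using l that unfolding Lset_def by (auto simp: PiE_def extensional_def)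
  define T where "T = {\<tau>. \<tau> permutes {N..<M}}"
  have eq: "{\<pi>. \<pi> permutes {..<M} \<and> restrict \<pi> {..<N} = l} = (\<lambda>\<tau>. \<sigma> \<circ> \<tau>) ` T"
  proof (rule set_eqI, rule iffI)
    fix \<pi> assume "\<pi> \<in> {\<pi>. \<pi> permutes {..<M} \<and> restrict \<pi> {..<N} = l}"
    then have \<pi>: "\<pi> permutes {..<M}" "restrict \<pi> {..<N} = l" by auto
    have pk: "\<pi> k = l k" if "k < N" for k using fun_cong[OF \<pi>(2), of k] that by simp
    define \<tau> where "\<tau> = inv \<sigma> \<circ> \<pi>"
    have tp: "\<tau> permutes {..<M}" unfolding \<tau>_def by (rule permutes_compose[OF \<pi>(1) permutes_inv[OF \<sigma>(1)]])
    have tk: "\<tau> k = k" if "k < N" for k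
    proof -
      have "inv \<sigma> (\<sigma> k) = k" by (rule permutes_inverses(2)[OF \<sigma>(1)])
      moreover have "\<sigma> k = \<pi> k" using pk[OF that] \<sigma>(2) that by simp
      ultimately show ?thesis unfolding \<tau>_def by simp
    qed
    have "\<tau> permutes {N..<M}"
    proof -
      have a: "\<forall>x. x \<notin> {N..<M} \<longrightarrow> \<tau> x = x"
      proof (intro allI impI)
        fix x assume "x \<notin> {N..<M}"
        then have "x < N \<or> x \<notin> {..<M}" by auto
        then show "\<tau> x = x" using tk permutes_not_in[OF tp] by blast
      qed
      have b: "\<forall>y. \<exists>!x. \<tau> x = y" using tp unfolding permutes_def by blast
      show ?thesis unfolding permutes_def using a b by blast
    qed
    moreover have "\<pi> = \<sigma> \<circ> \<tau>" unfolding \<tau>_def using permutes_inverses(1)[OF \<sigma>(1)] by (auto simp: fun_eq_iff)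
    ultimately show "\<pi> \<in> (\<lambda>\<tau>. \<sigma> \<circ> \<tau>) ` T" unfolding T_def by auto
  next
    fix \<pi> assume "\<pi> \<in> (\<lambda>\<tau>. \<sigma> \<circ> \<tau>) ` T"
    then obtain \<tau> where \<tau>: "\<tau> permutes {N..<M}" "\<pi> = \<sigma> \<circ> \<tau>" unfolding T_def by auto
    have t1: "\<tau> permutes {..<M}" by (rule permutes_subset[OF \<tau>(1)]) auto
    have "restrict \<pi> {..<N} = l"
    proof
      fix k show "restrict \<pi> {..<N} k = l k"
        using \<tau> \<sigma>(2) lext permutes_not_in[OF \<tau>(1), of k] by (auto simp: restrict_def)
    qed
    then show "\<pi> \<in> {\<pi>. \<pi> permutes {..<M} \<and> restrict \<pi> {..<N} = l}"
      using permutes_compose[OF t1 \<sigma>(1)] \<tau>(2) by auto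
  qed
  have inj: "inj_on (\<lambda>\<tau>. \<sigma> \<circ> \<tau>) T"
    by (auto simp: inj_on_def fun_eq_iff dest: injD[OF permutes_inj[OF \<sigma>(1)]])
  have "card T = fact (M - N)" unfolding T_def by (rule card_permutations) auto
  then show ?thesis unfolding eq card_image[OF inj] .
qed

lemma sum_perm_restrict:
  assumes NM: "N \<le> M"
  shows "(\<Sum>\<pi>\<in>{\<pi>. \<pi> permutes {..<M}}. G (restrict \<pi> {..<N})) = fact (M - N) * (\<Sum>l\<in>Lset M N. G l)"
proof -
  have "(\<Sum>\<pi>\<in>{\<pi>. \<pi> permutes {..<M}}. G (restrict \<pi> {..<N}))
      = (\<Sum>l\<in>Lset M N. \<Sum>\<pi>\<in>{\<pi>\<in>{\<pi>. \<pi> permutes {..<M}}. restrict \<pi> {..<N} = l}. G (restrict \<pi> {..<N}))"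
    by (rule sum.group[symmetric, OF finite_perms finite_Lset]) (use perm_restrict_in_L NM in auto)
  also have "\<dots> = (\<Sum>l\<in>Lset M N. \<Sum>\<pi>\<in>{\<pi>. \<pi> permutes {..<M} \<and> restrict \<pi> {..<N} = l}. G l)"
    by (intro sum.cong) auto
  also have "\<dots> = (\<Sum>l\<in>Lset M N. fact (M - N) * G l)"
    by (intro sum.cong) (simp_all add: fibre_card[OF _ NM])
  finally show ?thesis by (simp add: sum_distrib_left)
qed

definition lsym :: "nat \<Rightarrow> nat \<Rightarrow> ((nat \<Rightarrow> real^'n) \<times> real) set \<Rightarrow> (nat \<Rightarrow> real^'n) \<Rightarrow> real" where
  "lsym M N H x = symmetrize M (\<lambda>y. loss N H (proj_first N y)) x"

lemma loss_cong: "(\<And>k. k < N \<Longrightarrow> y k = y' k) \<Longrightarrow> loss N H y = loss N H y'"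
  unfolding loss_def by (intro INF_cong refl) simp

lemma lsym_L:
  assumes NM: "N \<le> M"
  shows "lsym M N H x = (fact (M - N) / fact M) * (\<Sum>l\<in>Lset M N. loss N H (\<lambda>k. x (l k)))"
proof -
  have "(\<Sum>\<pi>\<in>{\<pi>. \<pi> permutes {..<M}}. loss N H (proj_first N (restrict (\<lambda>k. x (\<pi> k)) {..<M})))
      = (\<Sum>\<pi>\<in>{\<pi>. \<pi> permutes {..<M}}. (\<lambda>l. loss N H (\<lambda>k. x (l k))) (restrict \<pi> {..<N}))"
    by (intro sum.cong refl loss_cong) (use NM in \<open>auto simp: proj_first_def\<close>)
  also have "\<dots> = fact (M - N) * (\<Sum>l\<in>Lset M N. loss N H (\<lambda>k. x (l k)))"
    by (rule sum_perm_restrict[OF NM])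
  finally show ?thesis unfolding lsym_def symmetrize_def by simp
qed

lemma lsym_perm:
  assumes \<tau>: "\<tau> permutes {..<M}"
  shows "lsym M N H (\<lambda>k. x (\<tau> k)) = lsym M N H x"
proof -
  let ?P = "{\<pi>. \<pi> permutes {..<M}}"
  let ?g = "\<lambda>\<pi>. loss N H (proj_first N (restrict (\<lambda>k. x (\<pi> k)) {..<M}))"
  have img: "(\<lambda>\<pi>. \<tau> \<circ> \<pi>) ` ?P = ?P"
  proof (rule set_eqI, rule iffI)
    fix \<pi> assume "\<pi> \<in> (\<lambda>\<pi>. \<tau> \<circ> \<pi>) ` ?P" then show "\<pi> \<in> ?P" using permutes_compose[OF _ \<tau>] by auto
  next
    fix \<pi> assume \<pi>: "\<pi> \<in> ?P"
    have "inv \<tau> \<circ> \<pi> \<in> ?P" using permutes_compose[OF _ permutes_inv[OF \<tau>]] \<pi> by auto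
    moreover have "\<pi> = \<tau> \<circ> (inv \<tau> \<circ> \<pi>)" using permutes_inverses(1)[OF \<tau>] by (auto simp: fun_eq_iff)
    ultimately show "\<pi> \<in> (\<lambda>\<pi>. \<tau> \<circ> \<pi>) ` ?P" by blast
  qed
  have inj: "inj_on (\<lambda>\<pi>. \<tau> \<circ> \<pi>) ?P"
    by (auto simp: inj_on_def fun_eq_iff dest: injD[OF permutes_inj[OF \<tau>]])
  have "sum ?g ?P = sum ?g ((\<lambda>\<pi>. \<tau> \<circ> \<pi>) ` ?P)" using img by simp
  also have "\<dots> = sum (?g \<circ> (\<lambda>\<pi>. \<tau> \<circ> \<pi>)) ?P" by (rule sum.reindex[OF inj])
  finally show ?thesis unfolding lsym_def symmetrize_def by (simp add: o_def)
qed

lemma costM_perm: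
  assumes \<tau>: "\<tau> permutes {..<M}"
  shows "costM nrm M (\<lambda>k. x (\<tau> k)) (\<lambda>k. y (\<tau> k)) = costM nrm M x y"
  unfolding costM_def using sum.permute[OF \<tau>, of "\<lambda>i. nrm (x i - y i)"] by (simp add: o_def)

lemma equiv_pe: "equiv (Ihat M np) (perm_equiv M np)"
proof (rule equivI)
  show "perm_equiv M np \<subseteq> Ihat M np \<times> Ihat M np" unfolding perm_equiv_def by auto
  show "refl_on (Ihat M np) (perm_equiv M np)"
    unfolding refl_on_def perm_equiv_def by (auto intro!: exI[of _ id] permutes_id)
  show "sym (perm_equiv M np)"
  proof (rule symI)
    fix i j assume "(i, j) \<in> perm_equiv M np"
    then obtain \<pi> where \<pi>: "i \<in> Ihat M np" "j \<in> Ihat M np" "\<pi> permutes {..<M}" "\<forall>k<M. i k = j (\<pi> k)"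
      unfolding perm_equiv_def by auto
    have "\<forall>k<M. j k = i (inv \<pi> k)"
    proof (intro allI impI)
      fix k assume k: "k < M"
      have "inv \<pi> k < M" using permutes_in_image[OF permutes_inv[OF \<pi>(3)]] k by auto
      then have "i (inv \<pi> k) = j (\<pi> (inv \<pi> k))" using \<pi>(4) by blast
      then show "j k = i (inv \<pi> k)" using permutes_inverses(1)[OF \<pi>(3)] by simp
    qed
    then show "(j, i) \<in> perm_equiv M np" unfolding perm_equiv_def using \<pi> permutes_inv[OF \<pi>(3)] by blast
  qed
  show "trans (perm_equiv M np)"
  proof (rule transI)
    fix i j m assume "(i, j) \<in> perm_equiv M np" "(j, m) \<in> perm_equiv M np"
    then obtain \<pi> \<sigma> where a: "i \<in> Ihat M np" "m \<in> Ihat M np" "\<pi> permutes {..<M}" "\<forall>k<M. i k = j (\<pi> k)"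
      "\<sigma> permutes {..<M}" "\<forall>k<M. j k = m (\<sigma> k)" unfolding perm_equiv_def by auto
    have "\<forall>k<M. i k = m ((\<sigma> \<circ> \<pi>) k)"
      using a(3,4,6) permutes_in_image[OF a(3)] by auto
    then show "(i, m) \<in> perm_equiv M np" unfolding perm_equiv_def using a permutes_compose[OF a(3,5)] by blast
  qed
qed

lemma finite_Ihat: "finite (Ihat M np)" unfolding Ihat_def by (rule finite_PiE) auto

lemma finite_Icls: "finite (Icls M np)" unfolding Icls_def by (rule finite_quotient[OF finite_Ihat]) (use equiv_pe in \<open>auto simp: equiv_def\<close>)

lemma finite_cls: "\<iota> \<in> Icls M np \<Longrightarrow> finite \<iota>"
  unfolding Icls_def by (rule finite_equiv_class[OF finite_Ihat]) (use equiv_pe in \<open>auto simp: equiv_def\<close>)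

lemma cls_sub: "\<iota> \<in> Icls M np \<Longrightarrow> \<iota> \<subseteq> Ihat M np"
  unfolding Icls_def using in_quotient_imp_subset[OF equiv_pe] by blast

lemma cls_ne: "\<iota> \<in> Icls M np \<Longrightarrow> \<iota> \<noteq> {}"
  unfolding Icls_def using in_quotient_imp_non_empty[OF equiv_pe] by blast

definition cls :: "nat \<Rightarrow> nat \<Rightarrow> (nat \<Rightarrow> nat) \<Rightarrow> (nat \<Rightarrow> nat) set" where
  "cls M np i = perm_equiv M np `` {i}"

lemma cls_in: "i \<in> Ihat M np \<Longrightarrow> cls M np i \<in> Icls M np"
  unfolding cls_def Icls_def by (rule quotientI)

lemma cls_self: "i \<in> Ihat M np \<Longrightarrow> i \<in> cls M np i"
  unfolding cls_def by (rule equiv_class_self[OF equiv_pe])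

lemma cls_eq: "\<iota> \<in> Icls M np \<Longrightarrow> i \<in> \<iota> \<Longrightarrow> cls M np i = \<iota>"
proof -
  assume a: "\<iota> \<in> Icls M np" "i \<in> \<iota>"
  then have i: "i \<in> Ihat M np" using cls_sub by blast
  show ?thesis
    by (rule quotient_eqI[OF equiv_pe cls_in[OF i, unfolded Icls_def] a(1)[unfolded Icls_def] cls_self[OF i] a(2)])
      (use equiv_pe i in \<open>auto simp: equiv_def refl_on_def\<close>)
qed

lemma same_cls_perm:
  assumes "\<iota> \<in> Icls M np" "i \<in> \<iota>" "j \<in> \<iota>"
  shows "\<exists>\<pi>. \<pi> permutes {..<M} \<and> (\<forall>k<M. i k = j (\<pi> k))"
proof -
  have "(i, j) \<in> perm_equiv M np"
    using in_quotient_imp_in_rel[OF equiv_pe assms(1)[unfolded Icls_def]] assms(2,3) by blast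
  then show ?thesis unfolding perm_equiv_def by auto
qed

lemma sum_Ihat_cls: "(\<Sum>i\<in>Ihat M np. g i) = (\<Sum>\<iota>\<in>Icls M np. \<Sum>i\<in>\<iota>. g i)"
proof -
  have "(\<Sum>i\<in>Ihat M np. g i) = (\<Sum>i\<in>\<Union>(Icls M np). g i)"
    unfolding Icls_def Union_quotient[OF equiv_pe] ..
  also have "\<dots> = (\<Sum>\<iota>\<in>Icls M np. \<Sum>i\<in>\<iota>. g i)"
  proof -
    have "\<forall>A\<in>Icls M np. finite A" using finite_cls by blast
    moreover have "\<forall>A\<in>Icls M np. \<forall>B\<in>Icls M np. A \<noteq> B \<longrightarrow> A \<inter> B = {}"
      using quotient_disj[OF equiv_pe] unfolding Icls_def by blast
    ultimately show ?thesis using sum.Union_disjoint[of "Icls M np" g] by simp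
  qed
  finally show ?thesis .
qed

lemma sum_regroup: "(\<Sum>i\<in>Ihat M np. (g i::real) * F (cls M np i)) = (\<Sum>\<iota>\<in>Icls M np. (\<Sum>i\<in>\<iota>. g i) * F \<iota>)"
proof -
  have "(\<Sum>i\<in>\<iota>. g i * F (cls M np i)) = (\<Sum>i\<in>\<iota>. g i) * F \<iota>" if "\<iota> \<in> Icls M np" for \<iota>
  proof -
    have "(\<Sum>i\<in>\<iota>. g i * F (cls M np i)) = (\<Sum>i\<in>\<iota>. g i * F \<iota>)"
      by (intro sum.cong refl) (simp add: cls_eq[OF that])
    also have "\<dots> = (\<Sum>i\<in>\<iota>. g i) * F \<iota>" by (rule sum_distrib_right[symmetric])
    finally show ?thesis .
  qed
  then show ?thesis unfolding sum_Ihat_cls by (intro sum.cong) auto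
qed

lemma sum_w: "(\<Sum>j\<in>{1..np}. p j) = 1 \<Longrightarrow> (\<Sum>i\<in>Ihat M np. \<Prod>k<M. p (i k)) = (1::real)"
  unfolding Ihat_def using prod_sum_PiE[of "{..<M}" "\<lambda>_. {1..np}" "\<lambda>_ j. p j"] by simp

lemma sum_p_cls: "(\<Sum>j\<in>{1..np}. p j) = 1 \<Longrightarrow> (\<Sum>\<iota>\<in>Icls M np. p_cls M p \<iota>) = 1"
proof -
  assume "(\<Sum>j\<in>{1..np}. p j) = 1"
  then have "(\<Sum>i\<in>Ihat M np. \<Prod>k<M. p (i k)) = (1::real)" by (rule sum_w)
  then show ?thesis unfolding p_cls_def sum_Ihat_cls by simp
qed

lemma w_pos: "\<forall>j\<in>{1..np}. p j > 0 \<Longrightarrow> i \<in> Ihat M np \<Longrightarrow> (\<Prod>k<M. p (i k)) > (0::real)"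
  unfolding Ihat_def by (intro prod_pos) (auto simp: PiE_def Pi_def)

lemma p_cls_pos: "\<forall>j\<in>{1..np}. p j > 0 \<Longrightarrow> \<iota> \<in> Icls M np \<Longrightarrow> p_cls M p \<iota> > (0::real)"
proof -
  assume p: "\<forall>j\<in>{1..np}. p j > 0" and i: "\<iota> \<in> Icls M np"
  obtain i0 where "i0 \<in> \<iota>" using cls_ne[OF i] by blast
  then show ?thesis unfolding p_cls_def
    using finite_cls[OF i] cls_sub[OF i] w_pos[OF p]
    by (intro sum_pos2[of _ i0]) (auto intro: less_imp_le)
qed

locale setting =
  fixes nrm :: "real^'n \<Rightarrow> real"
    and M N np :: nat
    and \<rho> :: real
    and p :: "nat \<Rightarrow> real"
    and xi :: "nat \<Rightarrow> real^'n"
    and H :: "((nat \<Rightarrow> real^'n) \<times> real) set"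
    and \<upsilon> :: "(nat \<Rightarrow> nat) set \<Rightarrow> (nat \<Rightarrow> nat)"
    and V :: "((nat \<Rightarrow> real^'n) \<times> real) set"
  assumes rho: "\<rho> > 0"
    and N1: "1 \<le> N" and NM: "N \<le> M"
    and np1: "1 \<le> np" and ppos: "\<forall>i\<in>{1..np}. p i > 0" and psum: "(\<Sum>i\<in>{1..np}. p i) = 1"
    and nrm: "is_norm nrm"
    and V: "finite V" "V \<noteq> {}" "V \<subseteq> blocks N \<times> UNIV"
    and HV: "H = {((\<lambda>k. if k < N then (\<Sum>v\<in>V. w v *\<^sub>R fst v k) else undefined),
           (\<Sum>v\<in>V. w v * snd v)) | w. (\<forall>v\<in>V. 0 \<le> w v) \<and> (\<Sum>v\<in>V. w v) = 1}"
    and ups: "\<forall>\<iota>\<in>Icls M np. \<upsilon> \<iota> \<in> \<iota>"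
begin

definition "cc = fact (M - N) / (fact M :: real)"
definition "L = Lset M N"
definition "xt i = xi_tuple M xi i"

lemma cc_pos: "cc > 0" unfolding cc_def by simp

lemma sum_selT:
  assumes l: "l \<in> L"
  shows "(\<Sum>j<M. selT M N l a j \<bullet> x j) = (\<Sum>k<N. a k \<bullet> x (l k))"
proof -
  have lm: "l k < M" if "k < N" for k using l that unfolding L_def Lset_def by (auto simp: PiE_def Pi_def)
  have "(\<Sum>j<M. selT M N l a j \<bullet> x j) = (\<Sum>j<M. \<Sum>k\<in>{k\<in>{..<N}. l k = j}. a k \<bullet> x (l k))"
    unfolding selT_def by (intro sum.cong refl) (auto simp: inner_sum_left)
  also have "\<dots> = (\<Sum>k<N. a k \<bullet> x (l k))"
    by (rule sum.group) (use lm in auto)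
  finally show ?thesis .
qed

lemma wd_rep:
  fixes \<mu> :: real and \<sigma>0 :: real and z0 :: "nat \<Rightarrow> real^'n" and a0 :: "(nat \<Rightarrow> nat) \<Rightarrow> nat \<Rightarrow> real^'n"
    and b0 :: "(nat \<Rightarrow> nat) \<Rightarrow> real" and \<xi> :: "nat \<Rightarrow> real^'n"
  assumes c1: "0 \<le> \<sigma>0 + (\<Sum>j<M. z0 j \<bullet> \<xi> j) + cc * (\<Sum>l\<in>L. b0 l)"
    and c2: "\<forall>j<M. dual_norm nrm (z0 j) \<le> \<mu>"
    and c3: "z0 = (\<lambda>j. if j < M then cc *\<^sub>R (\<Sum>l\<in>L. selT M N l (a0 l) j) else undefined)"
    and c4: "\<forall>l\<in>L. ((\<lambda>k. if k < N then - a0 l k else undefined), - b0 l) \<in> H"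
  shows "lsym M N H x \<le> \<mu> * costM nrm M x \<xi> + \<sigma>0"
proof -
  have lsL: "lsym M N H x = cc * (\<Sum>l\<in>L. loss N H (\<lambda>k. x (l k)))"
    unfolding cc_def L_def by (rule lsym_L[OF NM])
  have "loss N H (\<lambda>k. x (l k)) \<le> - (\<Sum>k<N. a0 l k \<bullet> x (l k)) - b0 l" if "l \<in> L" for l
  proof -
    have "loss N H (\<lambda>k. x (l k)) \<le> lin N ((\<lambda>k. if k < N then - a0 l k else undefined), - b0 l) (\<lambda>k. x (l k))"
      by (rule loss_le[OF V HV]) (use c4 that in auto)
    also have "\<dots> = - (\<Sum>k<N. a0 l k \<bullet> x (l k)) - b0 l"
      unfolding lin_def by (simp add: sum_negf)
    finally show ?thesis .
  qed
  then have "lsym M N H x \<le> cc * (\<Sum>l\<in>L. - (\<Sum>k<N. a0 l k \<bullet> x (l k)) - b0 l)"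
    unfolding lsL using cc_pos by (intro mult_left_mono sum_mono) auto
  also have "\<dots> = - (\<Sum>j<M. z0 j \<bullet> x j) - cc * (\<Sum>l\<in>L. b0 l)"
  proof -
    have "(\<Sum>j<M. z0 j \<bullet> x j) = cc * (\<Sum>j<M. \<Sum>l\<in>L. selT M N l (a0 l) j \<bullet> x j)"
      unfolding c3 by (simp add: inner_sum_left sum_distrib_left)
    also have "\<dots> = cc * (\<Sum>l\<in>L. \<Sum>k<N. a0 l k \<bullet> x (l k))"
      by (subst sum.swap) (simp add: sum_selT)
    finally show ?thesis by (simp add: sum_subtractf sum_negf algebra_simps)
  qed
  also have "\<dots> = - (\<Sum>j<M. z0 j \<bullet> \<xi> j) - cc * (\<Sum>l\<in>L. b0 l) + (\<Sum>j<M. z0 j \<bullet> (\<xi> j - x j))"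
    by (simp add: inner_diff_right sum_subtractf)
  also have "\<dots> \<le> \<sigma>0 + (\<Sum>j<M. z0 j \<bullet> (\<xi> j - x j))" using c1 by linarith
  also have "(\<Sum>j<M. z0 j \<bullet> (\<xi> j - x j)) \<le> (\<Sum>j<M. \<mu> * nrm (x j - \<xi> j))"
  proof (rule sum_mono)
    fix j assume j: "j \<in> {..<M}"
    have "z0 j \<bullet> (\<xi> j - x j) \<le> dual_norm nrm (z0 j) * nrm (\<xi> j - x j)" by (rule dual_ineq[OF nrm])
    also have "\<dots> \<le> \<mu> * nrm (\<xi> j - x j)" using c2 j nrm_nonneg[OF nrm] by (intro mult_right_mono) auto
    finally show "z0 j \<bullet> (\<xi> j - x j) \<le> \<mu> * nrm (x j - \<xi> j)" by (simp add: nrm_sub[OF nrm])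
  qed
  finally show ?thesis unfolding costM_def by (simp add: sum_distrib_left add.commute)
qed

lemma wd_point:
  assumes \<iota>: "\<iota> \<in> Icls M np" and i: "i \<in> \<iota>"
    and c1: "0 \<le> \<sigma>0 + (\<Sum>j<M. z0 j \<bullet> xt (\<upsilon> \<iota>) j) + cc * (\<Sum>l\<in>L. b0 l)"
    and c2: "\<forall>j<M. dual_norm nrm (z0 j) \<le> \<mu>"
    and c3: "z0 = (\<lambda>j. if j < M then cc *\<^sub>R (\<Sum>l\<in>L. selT M N l (a0 l) j) else undefined)"
    and c4: "\<forall>l\<in>L. ((\<lambda>k. if k < N then - a0 l k else undefined), - b0 l) \<in> H"
  shows "lsym M N H x \<le> \<mu> * costM nrm M x (xt i) + \<sigma>0"
proof -
  obtain \<pi> where \<pi>: "\<pi> permutes {..<M}" "\<forall>k<M. i k = \<upsilon> \<iota> (\<pi> k)"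
    using same_cls_perm[OF \<iota> i] ups \<iota> by blast
  define x' where "x' k = x (inv \<pi> k)" for k
  have l1: "lsym M N H x' = lsym M N H x" unfolding x'_def by (rule lsym_perm[OF permutes_inv[OF \<pi>(1)]])
  have "costM nrm M x (xt i) = costM nrm M (\<lambda>k. x' (\<pi> k)) (\<lambda>k. xt (\<upsilon> \<iota>) (\<pi> k))"
    unfolding costM_def x'_def xt_def xi_tuple_def
    using \<pi>(2) permutes_inverses(2)[OF \<pi>(1)] permutes_in_image[OF \<pi>(1)] by (intro sum.cong refl) auto
  also have "\<dots> = costM nrm M x' (xt (\<upsilon> \<iota>))" by (rule costM_perm[OF \<pi>(1)])
  finally have c: "costM nrm M x (xt i) = costM nrm M x' (xt (\<upsilon> \<iota>))" .
  have "lsym M N H x' \<le> \<mu> * costM nrm M x' (xt (\<upsilon> \<iota>)) + \<sigma>0" by (rule wd_rep[OF c1 c2 c3 c4])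
  then show ?thesis using l1 c by simp
qed

end

context setting begin

definition "w i = (\<Prod>k<M. p (i k))"
definition "PM = point_measure (Ihat M np) (\<lambda>i. ennreal (w i))"
definition "Q = PiM {..<M} (\<lambda>_. discrete_measure np p xi)"
definition "D0 = point_measure {1..np} (\<lambda>j. ennreal (p j))"

lemma w_nonneg: "i \<in> Ihat M np \<Longrightarrow> 0 \<le> w i"
  unfolding w_def using w_pos[OF ppos] by (simp add: less_imp_le)

lemma space_PM: "space PM = Ihat M np" unfolding PM_def by (simp add: space_point_measure)
lemma sets_PM: "sets PM = Pow (Ihat M np)" unfolding PM_def by (simp add: sets_point_measure)

lemma prob_PM: "prob_space PM"
  unfolding PM_def
proof (rule prob_space_point_measure[OF finite_Ihat])
  show "(\<Sum>s\<in>Ihat M np. ennreal (w s)) = 1"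
    using sum_w[OF psum] w_nonneg by (subst sum_ennreal) (auto simp: w_def)
qed auto

lemma prob_D0: "prob_space D0"
  unfolding D0_def
proof (rule prob_space_point_measure)
  show "(\<Sum>s\<in>{1..np}. ennreal (p s)) = 1"
    using ppos psum by (subst sum_ennreal) (auto simp: less_imp_le)
qed auto

lemma space_blockspace: "space (blockspace M) = blocks M"
  unfolding blockspace_def blocks_def by (simp add: space_PiM)

lemma disc_eq: "discrete_measure np p xi = distr D0 borel xi"
proof -
  have m: "xi \<in> D0 \<rightarrow>\<^sub>M borel" unfolding D0_def by simp
  have "distr D0 borel xi = measure_of (space (distr D0 borel xi)) (sets (distr D0 borel xi)) (emeasure (distr D0 borel xi))"
    by (rule measure_of_of_measure[symmetric])
  also have "\<dots> = measure_of UNIV (sets borel) (emeasure (distr D0 borel xi))" by simp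
  also have "\<dots> = measure_of UNIV (sets borel) (\<lambda>A. \<Sum>i\<in>{1..np}. ennreal (p i) * indicator A (xi i))"
  proof (rule measure_of_eq)
    show "sets borel \<subseteq> Pow UNIV" by simp
    fix a :: "(real^'n) set" assume "a \<in> sigma_sets UNIV (sets borel)"
    then have a: "a \<in> sets borel" by (metis sets.sigma_sets_eq space_borel)
    have "emeasure (distr D0 borel xi) a = emeasure D0 (xi -` a \<inter> {1..np})"
      using emeasure_distr[OF m a] unfolding D0_def by (simp add: space_point_measure)
    also have "\<dots> = (\<Sum>i\<in>xi -` a \<inter> {1..np}. ennreal (p i))"
      unfolding D0_def by (rule emeasure_point_measure_finite) auto
    also have "\<dots> = (\<Sum>i\<in>{1..np}. ennreal (p i) * indicator a (xi i))"
      by (rule sum.mono_neutral_cong_left) (auto simp: indicator_def)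
    finally show "emeasure (distr D0 borel xi) a = (\<Sum>i\<in>{1..np}. ennreal (p i) * indicator a (xi i))" .
  qed
  finally show ?thesis unfolding discrete_measure_def by simp
qed

lemma emeasure_disc: "A \<in> sets borel \<Longrightarrow> emeasure (discrete_measure np p xi) A = (\<Sum>j\<in>{1..np}. ennreal (p j) * indicator A (xi j))"
proof -
  assume a: "A \<in> sets borel"
  have m: "xi \<in> D0 \<rightarrow>\<^sub>M borel" unfolding D0_def by simp
  have "emeasure (distr D0 borel xi) A = emeasure D0 (xi -` A \<inter> {1..np})"
    using emeasure_distr[OF m a] unfolding D0_def by (simp add: space_point_measure)
  also have "\<dots> = (\<Sum>i\<in>xi -` A \<inter> {1..np}. ennreal (p i))"
    unfolding D0_def by (rule emeasure_point_measure_finite) auto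
  also have "\<dots> = (\<Sum>i\<in>{1..np}. ennreal (p i) * indicator A (xi i))"
    by (rule sum.mono_neutral_cong_left) (auto simp: indicator_def)
  finally show ?thesis unfolding disc_eq .
qed

lemma prob_disc: "prob_space (discrete_measure np p xi)"
  unfolding disc_eq by (rule prob_space.prob_space_distr[OF prob_D0]) (simp add: D0_def)

lemma sets_disc: "sets (discrete_measure np p xi) = sets borel"
  unfolding disc_eq by simp

lemma xt_blocks: "xt i \<in> blocks M"
  unfolding xt_def xi_tuple_def blocks_def by simp

lemma xt_meas: "xt \<in> PM \<rightarrow>\<^sub>M blockspace M"
  unfolding PM_def using xt_blocks by (simp add: space_blockspace)

lemma sets_Q: "sets Q = sets (blockspace M)"
  unfolding Q_def blockspace_def by (rule sets_PiM_cong) (simp_all add: sets_disc)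

lemma Q_eq: "Q = distr PM (blockspace M) xt"
proof -
  interpret pf: product_sigma_finite "\<lambda>_. discrete_measure np p xi"
    unfolding product_sigma_finite_def
    using prob_disc by (simp add: prob_space_imp_sigma_finite)
  have "distr PM (blockspace M) xt = Q"
    unfolding Q_def
  proof (rule pf.PiM_eqI)
    show "finite {..<M}" by simp
    show "sets (distr PM (blockspace M) xt) = sets (PiM {..<M} (\<lambda>_. discrete_measure np p xi))"
      using sets_Q unfolding Q_def by simp
    fix A assume A: "\<And>i. i \<in> {..<M} \<Longrightarrow> A i \<in> sets (discrete_measure np p xi)"
    have As: "PiE {..<M} A \<in> sets (blockspace M)"
      unfolding blockspace_def using A sets_disc by (intro sets_PiM_I_finite) auto
    have "emeasure (distr PM (blockspace M) xt) (PiE {..<M} A) = emeasure PM (xt -` PiE {..<M} A \<inter> Ihat M np)"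
      using emeasure_distr[OF xt_meas As] by (simp add: space_PM)
    also have "\<dots> = (\<Sum>i\<in>xt -` PiE {..<M} A \<inter> Ihat M np. ennreal (w i))"
      unfolding PM_def by (rule emeasure_point_measure_finite[OF finite_Ihat]) auto
    also have "\<dots> = (\<Sum>i\<in>Ihat M np. \<Prod>k<M. ennreal (p (i k)) * indicator (A k) (xi (i k)))"
    proof (rule sum.mono_neutral_cong_left)
      show "finite (Ihat M np)" by (rule finite_Ihat)
      show "xt -` PiE {..<M} A \<inter> Ihat M np \<subseteq> Ihat M np" by auto
      show "\<forall>i\<in>Ihat M np - xt -` PiE {..<M} A \<inter> Ihat M np. (\<Prod>k<M. ennreal (p (i k)) * indicator (A k) (xi (i k))) = 0"
      proof
        fix i assume "i \<in> Ihat M np - xt -` PiE {..<M} A \<inter> Ihat M np"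
        then obtain k where "k < M" "xi (i k) \<notin> A k" unfolding xt_def xi_tuple_def by (auto simp: PiE_def Pi_def)
        then have "\<exists>k\<in>{..<M}. ennreal (p (i k)) * indicator (A k) (xi (i k)) = 0" by (intro bexI[of _ k]) auto
        then show "(\<Prod>k<M. ennreal (p (i k)) * indicator (A k) (xi (i k))) = 0"
          by (intro prod_zero) auto
      qed
      fix i assume i: "i \<in> xt -` PiE {..<M} A \<inter> Ihat M np"
      then have h1: "\<forall>k<M. xi (i k) \<in> A k" unfolding xt_def xi_tuple_def by (auto simp: PiE_def Pi_def)
      have h2: "\<forall>k<M. 0 \<le> p (i k)" using i ppos unfolding Ihat_def by (auto simp: PiE_def Pi_def less_imp_le)
      show "ennreal (w i) = (\<Prod>k<M. ennreal (p (i k)) * indicator (A k) (xi (i k)))"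
      proof -
        have "(\<Prod>k<M. ennreal (p (i k)) * indicator (A k) (xi (i k))) = (\<Prod>k<M. ennreal (p (i k)))"
          using h1 by (intro prod.cong) auto
        also have "\<dots> = ennreal (w i)" unfolding w_def using h2 by (subst prod_ennreal) auto
        finally show ?thesis by simp
      qed
    qed
    also have "\<dots> = (\<Prod>k<M. \<Sum>j\<in>{1..np}. ennreal (p j) * indicator (A k) (xi j))"
      unfolding Ihat_def by (rule prod_sum_PiE[symmetric]) auto
    also have "\<dots> = (\<Prod>k\<in>{..<M}. emeasure (discrete_measure np p xi) (A k))"
      using A sets_disc by (intro prod.cong refl emeasure_disc[symmetric]) auto
    finally show "emeasure (distr PM (blockspace M) xt) (PiE {..<M} A) = (\<Prod>i\<in>{..<M}. emeasure (discrete_measure np p xi) (A i))" .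
  qed
  then show ?thesis by simp
qed

lemma integral_PM: "integral\<^sup>L PM f = (\<Sum>i\<in>Ihat M np. w i * f i)"
  unfolding PM_def using lebesgue_integral_point_measure_finite[of "Ihat M np" w f] w_nonneg finite_Ihat by simp

lemma nn_integral_PM: "integral\<^sup>N PM f = (\<Sum>i\<in>Ihat M np. ennreal (w i) * f i)"
  unfolding PM_def by (rule nn_integral_point_measure_finite[OF finite_Ihat])

lemma integrable_PM: "integrable PM (f :: _ \<Rightarrow> real)"
  unfolding PM_def by (rule integrable_point_measure_finite[OF finite_Ihat])

end

context setting begin

lemma L_lt: "l \<in> L \<Longrightarrow> k < N \<Longrightarrow> l k < M"
  unfolding L_def Lset_def by (auto simp: PiE_def Pi_def)

lemma L_inj: "l \<in> L \<Longrightarrow> inj_on l {..<N}"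
  unfolding L_def Lset_def by auto

lemma comp_meas: "j < M \<Longrightarrow> (\<lambda>x. x j) \<in> borel_measurable (blockspace M)"
  unfolding blockspace_def using measurable_component_singleton[of j "{..<M}" "\<lambda>_. borel"] by simp

lemma lin_meas: "l \<in> L \<Longrightarrow> (\<lambda>x. lin N v (\<lambda>k. x (l k))) \<in> borel_measurable (blockspace M)"
  unfolding lin_def
  by (intro borel_measurable_add borel_measurable_sum borel_measurable_inner borel_measurable_const comp_meas L_lt) auto

lemma lsym_eq: "lsym M N H x = cc * (\<Sum>l\<in>L. Min ((\<lambda>v. lin N v (\<lambda>k. x (l k))) ` V))"
  unfolding lsym_L[OF NM] cc_def L_def loss_Min[OF V HV] ..

lemma lsym_meas: "lsym M N H \<in> borel_measurable (blockspace M)"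
proof -
  have "(\<lambda>x. cc * (\<Sum>l\<in>L. Min ((\<lambda>v. lin N v (\<lambda>k. x (l k))) ` V))) \<in> borel_measurable (blockspace M)"
    by (intro borel_measurable_times borel_measurable_const borel_measurable_sum borel_measurable_Min V(1) lin_meas)
  moreover have "lsym M N H = (\<lambda>x. cc * (\<Sum>l\<in>L. Min ((\<lambda>v. lin N v (\<lambda>k. x (l k))) ` V)))"
    by (rule ext) (rule lsym_eq)
  ultimately show ?thesis by simp
qed

lemma cost_meas: "(\<lambda>z. costM nrm M (fst z) (snd z)) \<in> borel_measurable (blockspace M \<Otimes>\<^sub>M blockspace M)"
  unfolding costM_def
proof (intro borel_measurable_sum)
  fix i assume i: "i \<in> {..<M}"
  have "(\<lambda>z. fst z i - snd z i) \<in> borel_measurable (blockspace M \<Otimes>\<^sub>M blockspace M)"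
    by (intro borel_measurable_diff measurable_compose[OF measurable_fst comp_meas]
        measurable_compose[OF measurable_snd comp_meas]) (use i in auto)
  then show "(\<lambda>z. nrm (fst z i - snd z i)) \<in> borel_measurable (blockspace M \<Otimes>\<^sub>M blockspace M)"
    by (rule borel_measurable_continuous_on[OF nrm_cont[OF nrm]])
qed

lemma normsum_meas: "(\<lambda>x. \<Sum>j<M. norm (x j)) \<in> borel_measurable (blockspace M)"
proof (intro borel_measurable_sum)
  fix j assume "j \<in> {..<M}"
  then show "(\<lambda>x. norm (x j)) \<in> borel_measurable (blockspace M)"
    by (intro borel_measurable_continuous_on[where f=norm] continuous_on_norm_id comp_meas) auto
qed

lemma lsym_bound: "\<exists>A B. \<forall>x. \<bar>lsym M N H x\<bar> \<le> A + B * (\<Sum>j<M. norm (x j))"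
proof -
  obtain A B where AB: "\<forall>y. \<bar>loss N H y\<bar> \<le> A + B * (\<Sum>k<N. norm (y k))" using loss_bound[OF V HV] by blast
  have B0: "B \<ge> 0 \<or> True" by simp
  define B' where "B' = max B 0"
  have AB': "\<bar>loss N H y\<bar> \<le> A + B' * (\<Sum>k<N. norm (y k))" for y
    using AB[rule_format, of y] unfolding B'_def
    by (smt (verit) mult_right_mono sum_nonneg norm_ge_zero)
  have sl: "(\<Sum>k<N. norm (x (l k))) \<le> (\<Sum>j<M. norm (x j))" if l: "l \<in> L" for l x
  proof -
    have "(\<Sum>k<N. norm (x (l k))) = (\<Sum>j\<in>l ` {..<N}. norm (x j))"
      using sum.reindex[OF L_inj[OF l], of "\<lambda>j. norm (x j)"] by (simp add: o_def)
    also have "\<dots> \<le> (\<Sum>j<M. norm (x j))"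
      by (rule sum_mono2) (use L_lt[OF l] in auto)
    finally show ?thesis .
  qed
  show ?thesis
  proof (intro exI allI)
    fix x
    have "\<bar>lsym M N H x\<bar> = cc * \<bar>\<Sum>l\<in>L. loss N H (\<lambda>k. x (l k))\<bar>"
      unfolding lsym_L[OF NM] cc_def[symmetric] L_def[symmetric] using cc_pos by (simp add: abs_mult)
    also have "\<dots> \<le> cc * (\<Sum>l\<in>L. \<bar>loss N H (\<lambda>k. x (l k))\<bar>)"
      using cc_pos by (intro mult_left_mono sum_abs) auto
    also have "\<dots> \<le> cc * (\<Sum>l\<in>L. A + B' * (\<Sum>j<M. norm (x j)))"
      using cc_pos by (intro mult_left_mono sum_mono order.trans[OF AB'] add_left_mono mult_left_mono sl)
        (auto simp: B'_def)
    also have "\<dots> = cc * card L * A + cc * card L * B' * (\<Sum>j<M. norm (x j))"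
      by (simp add: algebra_simps)
    finally show "\<bar>lsym M N H x\<bar> \<le> cc * card L * A + cc * card L * B' * (\<Sum>j<M. norm (x j))" .
  qed
qed

lemma lsym_integrable:
  assumes P: "P \<in> finite_first_moment_probs M"
  shows "integrable P (lsym M N H)"
proof -
  have sP: "sets P = sets (blockspace M)" and fin: "(\<integral>\<^sup>+ x. ennreal (\<Sum>i<M. norm (x i)) \<partial>P) < \<infinity>"
    and pP: "prob_space P" using P unfolding finite_first_moment_probs_def by auto
  interpret prob_space P by (rule pP)
  obtain A B where AB: "\<forall>x. \<bar>lsym M N H x\<bar> \<le> A + B * (\<Sum>j<M. norm (x j))" using lsym_bound by blast
  have mP: "(\<lambda>x. \<Sum>j<M. norm (x j)) \<in> borel_measurable P"
    using normsum_meas measurable_cong_sets[OF sP refl] by blast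
  have i1: "integrable P (\<lambda>x. \<Sum>j<M. norm (x j))"
    by (rule integrableI_nonneg[OF mP]) (use fin in \<open>auto intro!: sum_nonneg\<close>)
  have i2: "integrable P (\<lambda>x. A + B * (\<Sum>j<M. norm (x j)))"
  proof -
    have "integrable P (\<lambda>x. B * (\<Sum>j<M. norm (x j)))" using i1 by simp
    moreover have "integrable P (\<lambda>x. A)" by simp
    ultimately show ?thesis by simp
  qed
  show ?thesis
  proof (rule Bochner_Integration.integrable_bound[OF i2])
    show "lsym M N H \<in> borel_measurable P" using lsym_meas measurable_cong_sets[OF sP refl] by blast
    show "AE x in P. norm (lsym M N H x) \<le> norm (A + B * (\<Sum>j<M. norm (x j)))"
      using AB by (auto intro!: AE_I2 order.trans[OF _ abs_ge_self])
  qed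
qed

end

context setting begin

lemma singleton_sets: "y \<in> blocks M \<Longrightarrow> {y} \<in> sets (blockspace M)"
proof -
  assume y: "y \<in> blocks M"
  have "{y} = PiE {..<M} (\<lambda>k. {y k})"
  proof (rule set_eqI, rule iffI)
    fix x assume "x \<in> {y}" then show "x \<in> PiE {..<M} (\<lambda>k. {y k})" using y unfolding blocks_def by auto
  next
    fix x assume x: "x \<in> PiE {..<M} (\<lambda>k. {y k})"
    have "x k = y k" for k
    proof (cases "k < M")
      case True then show ?thesis using x by (auto simp: PiE_def Pi_def)
    next
      case False then show ?thesis using x y unfolding blocks_def by (auto simp: PiE_def extensional_def)
    qed
    then show "x \<in> {y}" by auto
  qed
  moreover have "PiE {..<M} (\<lambda>k. {y k}) \<in> sets (blockspace M)"
    unfolding blockspace_def by (intro sets_PiM_I_finite) auto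
  ultimately show ?thesis by simp
qed

lemma S_sets: "xt ` Ihat M np \<in> sets (blockspace M)"
proof -
  have "(\<Union>i\<in>Ihat M np. {xt i}) \<in> sets (blockspace M)"
    by (intro sets.finite_UN finite_Ihat singleton_sets xt_blocks)
  then show ?thesis by (simp add: UNION_singleton_eq_range)
qed

lemma weak_duality:
  assumes P: "P \<in> ot_ball nrm M (real M * \<rho>) Q"
    and mu: "0 \<le> \<mu>"
    and pt: "\<And>i x. i \<in> Ihat M np \<Longrightarrow> lsym M N H x \<le> \<mu> * costM nrm M x (xt i) + \<sigma> (cls M np i)"
  shows "(\<integral>x. lsym M N H x \<partial>P) \<le> \<mu> * real M * \<rho> + (\<Sum>\<iota>\<in>Icls M np. p_cls M p \<iota> * \<sigma> \<iota>)"
proof -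
  define T where "T = (\<Sum>\<iota>\<in>Icls M np. p_cls M p \<iota> * \<sigma> \<iota>)"
  define S where "S = xt ` Ihat M np"
  define m where "m y = Min ((\<lambda>i. \<sigma> (cls M np i)) ` {i\<in>Ihat M np. xt i = y})" for y
  define s where "s y = (\<Sum>y0\<in>S. indicator {y0} y * m y0)" for y
  have finS: "finite S" unfolding S_def using finite_Ihat by simp
  have s_S: "s y = m y" if "y \<in> S" for y
  proof -
    have "s y = (\<Sum>y0\<in>S. if y0 = y then m y0 else 0)"
      unfolding s_def by (intro sum.cong) (auto simp: indicator_def)
    also have "\<dots> = m y" using that finS by (simp add: sum.delta')
    finally show ?thesis .
  qed
  have s_le: "s (xt i) \<le> \<sigma> (cls M np i)" if i: "i \<in> Ihat M np" for i
  proof -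
    have "s (xt i) = m (xt i)" using i by (intro s_S) (auto simp: S_def)
    also have "\<dots> \<le> \<sigma> (cls M np i)" unfolding m_def
      using i finite_Ihat by (intro Min_le) auto
    finally show ?thesis .
  qed
  have pt2: "lsym M N H x \<le> \<mu> * costM nrm M x y + s y" if y: "y \<in> S" for x y
  proof -
    have ne: "{i\<in>Ihat M np. xt i = y} \<noteq> {}" using y unfolding S_def by auto
    have "m y \<in> (\<lambda>i. \<sigma> (cls M np i)) ` {i\<in>Ihat M np. xt i = y}"
      unfolding m_def by (rule Min_in) (use ne finite_Ihat[of M np] in auto)
    then obtain i0 where i0: "i0 \<in> Ihat M np" "xt i0 = y" "m y = \<sigma> (cls M np i0)" by auto
    show ?thesis using pt[OF i0(1), of x] i0 s_S[OF y] by simp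
  qed
  have s_meas: "s \<in> borel_measurable (blockspace M)"
    unfolding s_def
    by (intro borel_measurable_sum borel_measurable_times borel_measurable_const borel_measurable_indicator
        singleton_sets) (use xt_blocks in \<open>auto simp: S_def\<close>)
  from P have PP: "P \<in> finite_first_moment_probs M" and oc: "ot_cost nrm M P Q \<le> ennreal (real M * \<rho>)"
    unfolding ot_ball_def by auto
  have sP: "sets P = sets (blockspace M)" using PP unfolding finite_first_moment_probs_def by auto
  have intP: "integrable P (lsym M N H)" by (rule lsym_integrable[OF PP])
  have main: "(\<integral>x. lsym M N H x \<partial>P) \<le> \<mu> * (real M * \<rho> + e) + T" if e: "e > 0" for e
  proof -
    have "ot_cost nrm M P Q < ennreal (real M * \<rho> + e)"
    proof (rule order.strict_trans1[OF oc])
      show "ennreal (real M * \<rho>) < ennreal (real M * \<rho> + e)"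
        using e rho by (subst ennreal_less_iff) auto
    qed
    then obtain \<pi> where \<pi>: "\<pi> \<in> couplings M P Q"
      and cl: "(\<integral>\<^sup>+ xy. ennreal (costM nrm M (fst xy) (snd xy)) \<partial>\<pi>) < ennreal (real M * \<rho> + e)"
      unfolding ot_cost_def by (auto simp: INF_less_iff)
    have pp: "prob_space \<pi>" and s\<pi>: "sets \<pi> = sets (blockspace M \<Otimes>\<^sub>M blockspace M)"
      and d1: "distr \<pi> (blockspace M) fst = P" and d2: "distr \<pi> (blockspace M) snd = Q"
      using \<pi> unfolding couplings_def by auto
    interpret prob_space \<pi> by (rule pp)
    have mfst: "fst \<in> \<pi> \<rightarrow>\<^sub>M blockspace M" using measurable_cong_sets[OF s\<pi> refl] measurable_fst by blast
    have msnd: "snd \<in> \<pi> \<rightarrow>\<^sub>M blockspace M" using measurable_cong_sets[OF s\<pi> refl] measurable_snd by blast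
    have mcost: "(\<lambda>z. costM nrm M (fst z) (snd z)) \<in> borel_measurable \<pi>"
      using measurable_cong_sets[OF s\<pi> refl] cost_meas by blast
    have cost_nn: "0 \<le> costM nrm M a b" for a b unfolding costM_def using nrm_nonneg[OF nrm] by (simp add: sum_nonneg)
    have i1: "integrable \<pi> (\<lambda>z. lsym M N H (fst z))"
      using integrable_distr_eq[OF mfst lsym_meas] intP d1 by simp
    have i2: "integrable \<pi> (\<lambda>z. costM nrm M (fst z) (snd z))"
      by (rule integrableI_nonneg[OF mcost]) (use cl cost_nn in \<open>auto simp: top_unique intro: order.strict_trans\<close>)
    have i3': "integrable Q s"
      unfolding Q_eq using integrable_distr_eq[OF xt_meas s_meas] integrable_PM by simp
    have i3: "integrable \<pi> (\<lambda>z. s (snd z))"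
      using integrable_distr_eq[OF msnd s_meas] i3' d2 by simp
    have AE_S: "AE z in \<pi>. snd z \<in> S"
    proof -
      have setS: "{x \<in> space (blockspace M). x \<in> S} \<in> sets (blockspace M)"
        using S_sets unfolding S_def by (simp add: Int_def[symmetric] sets.Int_space_eq1)
      have "AE y in Q. y \<in> S"
        unfolding Q_eq by (subst AE_distr_iff[OF xt_meas setS]) (auto simp: S_def space_PM intro!: AE_I2)
      then show ?thesis using AE_distr_iff[OF msnd setS] d2 by metis
    qed
    have AEb: "AE z in \<pi>. lsym M N H (fst z) \<le> \<mu> * costM nrm M (fst z) (snd z) + s (snd z)"
      using AE_S by eventually_elim (rule pt2)
    have "(\<integral>x. lsym M N H x \<partial>P) = (\<integral>z. lsym M N H (fst z) \<partial>\<pi>)"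
      using integral_distr[OF mfst lsym_meas] d1 by simp
    also have "\<dots> \<le> (\<integral>z. \<mu> * costM nrm M (fst z) (snd z) + s (snd z) \<partial>\<pi>)"
      by (rule integral_mono_AE[OF i1 _ AEb]) (use i2 i3 in simp)
    also have "\<dots> = \<mu> * (\<integral>z. costM nrm M (fst z) (snd z) \<partial>\<pi>) + (\<integral>z. s (snd z) \<partial>\<pi>)"
      using i2 i3 by simp
    also have "(\<integral>z. costM nrm M (fst z) (snd z) \<partial>\<pi>) \<le> real M * \<rho> + e"
    proof -
      have "(\<integral>z. costM nrm M (fst z) (snd z) \<partial>\<pi>) = enn2real (\<integral>\<^sup>+ z. ennreal (costM nrm M (fst z) (snd z)) \<partial>\<pi>)"
        by (rule integral_eq_nn_integral[OF mcost]) (simp add: cost_nn)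
      also have "\<dots> < real M * \<rho> + e"
        using cl by (subst enn2real_less_iff) (auto simp: top_unique intro: order.strict_trans)
      finally show ?thesis by simp
    qed
    also have "(\<integral>z. s (snd z) \<partial>\<pi>) = (\<integral>y. s y \<partial>Q)"
      using integral_distr[OF msnd s_meas] d2 by simp
    also have "\<dots> = (\<Sum>i\<in>Ihat M np. w i * s (xt i))"
      unfolding Q_eq integral_distr[OF xt_meas s_meas] integral_PM ..
    also have "\<dots> \<le> (\<Sum>i\<in>Ihat M np. w i * \<sigma> (cls M np i))"
      by (intro sum_mono mult_left_mono s_le w_nonneg)
    also have "\<dots> = T"
      unfolding T_def p_cls_def w_def by (rule sum_regroup)
    finally show ?thesis using mu by (simp add: mult_left_mono)
  qed
  show ?thesis
  proof (rule ccontr)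
    assume "\<not> ?thesis"
    then have g: "(\<integral>x. lsym M N H x \<partial>P) - (\<mu> * real M * \<rho> + T) > 0" unfolding T_def by simp
    define e where "e = ((\<integral>x. lsym M N H x \<partial>P) - (\<mu> * real M * \<rho> + T)) / (\<mu> + 1)"
    have e: "e > 0" unfolding e_def using g mu by simp
    have "\<mu> * e < (\<integral>x. lsym M N H x \<partial>P) - (\<mu> * real M * \<rho> + T)"
    proof -
      have "\<mu> * e < (\<mu> + 1) * e" using e by simp
      also have "\<dots> = (\<integral>x. lsym M N H x \<partial>P) - (\<mu> * real M * \<rho> + T)" unfolding e_def using mu by simp
      finally show ?thesis .
    qed
    then show False using main[OF e] by (simp add: algebra_simps)
  qed
qed

end

context setting begin

lemma lsym_cong: "(\<And>k. k < M \<Longrightarrow> y k = y' k) \<Longrightarrow> lsym M N H y = lsym M N H y'"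
proof -
  assume e: "\<And>k. k < M \<Longrightarrow> y k = y' k"
  have "restrict (\<lambda>k. y (\<pi> k)) {..<M} = restrict (\<lambda>k. y' (\<pi> k)) {..<M}" if "\<pi> permutes {..<M}" for \<pi>
    using e permutes_in_image[OF that] by (auto simp: restrict_def)
  then show ?thesis unfolding lsym_def symmetrize_def by (intro arg_cong2[where f="(*)"] refl sum.cong) auto
qed

lemma U_eq: "U_sym nrm M N \<rho> np p xi (loss N H) = (SUP P\<in>ot_ball nrm M (real M * \<rho>) Q. ereal (\<integral>x. lsym M N H x \<partial>P))"
  unfolding U_sym_def Q_def lsym_def[abs_def] ..

lemma lower_bound:
  fixes x :: "(nat \<Rightarrow> nat) set \<Rightarrow> nat \<Rightarrow> real^'n"
  assumes cost: "(\<Sum>\<iota>\<in>Icls M np. p_cls M p \<iota> * costM nrm M (x \<iota>) (xt (\<upsilon> \<iota>))) \<le> real M * \<rho>"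
  shows "ereal (\<Sum>\<iota>\<in>Icls M np. p_cls M p \<iota> * lsym M N H (x \<iota>)) \<le> U_sym nrm M N \<rho> np p xi (loss N H)"
proof -
  define pe where "pe i = (SOME \<pi>. \<pi> permutes {..<M} \<and> (\<forall>k<M. i k = \<upsilon> (cls M np i) (\<pi> k)))" for i
  have pe: "pe i permutes {..<M} \<and> (\<forall>k<M. i k = \<upsilon> (cls M np i) (pe i k))" if i: "i \<in> Ihat M np" for i
  proof -
    have "\<exists>\<pi>. \<pi> permutes {..<M} \<and> (\<forall>k<M. i k = \<upsilon> (cls M np i) (\<pi> k))"
      using same_cls_perm[OF cls_in[OF i] cls_self[OF i]] ups cls_in[OF i] by blast
    then show ?thesis unfolding pe_def by (rule someI_ex)
  qed
  define X where "X i = restrict (\<lambda>k. x (cls M np i) (pe i k)) {..<M}" for i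
  have X_blocks: "X i \<in> blocks M" for i unfolding X_def blocks_def by simp
  have lsym_X: "lsym M N H (X i) = lsym M N H (x (cls M np i))" if i: "i \<in> Ihat M np" for i
  proof -
    have "lsym M N H (X i) = lsym M N H (\<lambda>k. x (cls M np i) (pe i k))"
      by (rule lsym_cong) (simp add: X_def)
    also have "\<dots> = lsym M N H (x (cls M np i))" by (rule lsym_perm) (use pe[OF i] in blast)
    finally show ?thesis .
  qed
  have cost_X: "costM nrm M (X i) (xt i) = costM nrm M (x (cls M np i)) (xt (\<upsilon> (cls M np i)))" if i: "i \<in> Ihat M np" for i
  proof -
    have "costM nrm M (X i) (xt i) = costM nrm M (\<lambda>k. x (cls M np i) (pe i k)) (\<lambda>k. xt (\<upsilon> (cls M np i)) (pe i k))"
      unfolding costM_def X_def xt_def xi_tuple_def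
      using pe[OF i] permutes_in_image[of "pe i" "{..<M}"] by (intro sum.cong refl) auto
    also have "\<dots> = costM nrm M (x (cls M np i)) (xt (\<upsilon> (cls M np i)))"
      by (rule costM_perm) (use pe[OF i] in blast)
    finally show ?thesis .
  qed
  have X_meas: "X \<in> PM \<rightarrow>\<^sub>M blockspace M"
    unfolding PM_def using X_blocks by (simp add: space_blockspace)
  have XX_meas: "(\<lambda>i. (X i, xt i)) \<in> PM \<rightarrow>\<^sub>M (blockspace M \<Otimes>\<^sub>M blockspace M)"
    unfolding PM_def using X_blocks xt_blocks by (simp add: space_blockspace space_pair_measure)
  define P' where "P' = distr PM (blockspace M) X"
  define C where "C = distr PM (blockspace M \<Otimes>\<^sub>M blockspace M) (\<lambda>i. (X i, xt i))"
  have probP': "prob_space P'" unfolding P'_def by (rule prob_space.prob_space_distr[OF prob_PM X_meas])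
  have fin1: "(\<integral>\<^sup>+ y. ennreal (\<Sum>j<M. norm (y j)) \<partial>P') < \<infinity>"
  proof -
    have "(\<integral>\<^sup>+ y. ennreal (\<Sum>j<M. norm (y j)) \<partial>P') = (\<integral>\<^sup>+ i. ennreal (\<Sum>j<M. norm (X i j)) \<partial>PM)"
          proof -
      have mf: "(\<lambda>y. ennreal (\<Sum>j<M. norm (y j))) \<in> borel_measurable (blockspace M)"
        by (rule measurable_compose[OF normsum_meas measurable_ennreal])
      show ?thesis unfolding P'_def using nn_integral_distr[OF X_meas] mf by simp
    qed
    also have "\<dots> = (\<Sum>i\<in>Ihat M np. ennreal (w i) * ennreal (\<Sum>j<M. norm (X i j)))" by (rule nn_integral_PM)
    also have "\<dots> = ennreal (\<Sum>i\<in>Ihat M np. w i * (\<Sum>j<M. norm (X i j)))"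
      using w_nonneg by (subst sum_ennreal[symmetric]) (auto simp: ennreal_mult'' sum_nonneg intro!: sum.cong)
    finally show ?thesis by simp
  qed
  have P'mom: "P' \<in> finite_first_moment_probs M"
    unfolding finite_first_moment_probs_def using probP' fin1 by (simp add: P'_def)
  have C_coup: "C \<in> couplings M P' Q"
    unfolding couplings_def
  proof (intro CollectI conjI)
    show "prob_space C" unfolding C_def by (rule prob_space.prob_space_distr[OF prob_PM XX_meas])
    show "sets C = sets (blockspace M \<Otimes>\<^sub>M blockspace M)" unfolding C_def by simp
    show "distr C (blockspace M) fst = P'"
      unfolding C_def P'_def by (subst distr_distr[OF measurable_fst XX_meas]) (simp add: o_def)
    show "distr C (blockspace M) snd = Q"
      unfolding C_def Q_eq by (subst distr_distr[OF measurable_snd XX_meas]) (simp add: o_def)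
  qed
  have cost_nn: "0 \<le> costM nrm M a b" for a b unfolding costM_def using nrm_nonneg[OF nrm] by (simp add: sum_nonneg)
  have "ot_cost nrm M P' Q \<le> (\<integral>\<^sup>+ z. ennreal (costM nrm M (fst z) (snd z)) \<partial>C)"
    unfolding ot_cost_def by (rule INF_lower[OF C_coup])
  also have "\<dots> = (\<integral>\<^sup>+ i. ennreal (costM nrm M (X i) (xt i)) \<partial>PM)"
    unfolding C_def by (subst nn_integral_distr[OF XX_meas]) (use cost_meas in simp_all)
  also have "\<dots> = (\<Sum>i\<in>Ihat M np. ennreal (w i) * ennreal (costM nrm M (X i) (xt i)))" by (rule nn_integral_PM)
  also have "\<dots> = ennreal (\<Sum>i\<in>Ihat M np. w i * costM nrm M (X i) (xt i))"
    using w_nonneg cost_nn by (subst sum_ennreal[symmetric]) (auto simp: ennreal_mult'' intro!: sum.cong)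
  also have "(\<Sum>i\<in>Ihat M np. w i * costM nrm M (X i) (xt i)) = (\<Sum>i\<in>Ihat M np. w i * costM nrm M (x (cls M np i)) (xt (\<upsilon> (cls M np i))))"
    by (intro sum.cong refl) (simp add: cost_X)
  also have "\<dots> = (\<Sum>\<iota>\<in>Icls M np. p_cls M p \<iota> * costM nrm M (x \<iota>) (xt (\<upsilon> \<iota>)))"
    unfolding p_cls_def w_def by (rule sum_regroup)
  finally have oc: "ot_cost nrm M P' Q \<le> ennreal (real M * \<rho>)"
    using cost by (meson ennreal_leI order.trans)
  have ball: "P' \<in> ot_ball nrm M (real M * \<rho>) Q" unfolding ot_ball_def using P'mom oc by simp
  have "(\<integral>y. lsym M N H y \<partial>P') = (\<integral>i. lsym M N H (X i) \<partial>PM)"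
    unfolding P'_def by (rule integral_distr[OF X_meas lsym_meas])
  also have "\<dots> = (\<Sum>i\<in>Ihat M np. w i * lsym M N H (X i))" by (rule integral_PM)
  also have "\<dots> = (\<Sum>i\<in>Ihat M np. w i * lsym M N H (x (cls M np i)))" by (intro sum.cong refl) (simp add: lsym_X)
  also have "\<dots> = (\<Sum>\<iota>\<in>Icls M np. p_cls M p \<iota> * lsym M N H (x \<iota>))"
    unfolding p_cls_def w_def by (rule sum_regroup)
  finally have "ereal (\<Sum>\<iota>\<in>Icls M np. p_cls M p \<iota> * lsym M N H (x \<iota>)) = ereal (\<integral>y. lsym M N H y \<partial>P')" by simp
  also have "\<dots> \<le> U_sym nrm M N \<rho> np p xi (loss N H)"
    unfolding U_eq by (rule SUP_upper[OF ball])
  finally show ?thesis .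
qed

end

context setting begin

lemma sum_comb: "(\<Sum>i\<in>S. (c i::real) * ((1 - t) * f i + t * g i)) = (1 - t) * (\<Sum>i\<in>S. c i * f i) + t * (\<Sum>i\<in>S. c i * g i)"
proof -
  have "(\<Sum>i\<in>S. c i * ((1 - t) * f i + t * g i)) = (\<Sum>i\<in>S. (1 - t) * (c i * f i) + t * (c i * g i))"
    by (intro sum.cong refl) (simp add: algebra_simps)
  also have "\<dots> = (1 - t) * (\<Sum>i\<in>S. c i * f i) + t * (\<Sum>i\<in>S. c i * g i)"
    by (simp add: sum.distrib sum_distrib_left)
  finally show ?thesis .
qed

definition "mix t y1 y2 = (\<lambda>k. (1 - t) *\<^sub>R y1 k + t *\<^sub>R y2 k)"

lemma lsym_concave:
  assumes "0 \<le> t" "t \<le> 1"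
  shows "(1 - t) * lsym M N H y1 + t * lsym M N H y2 \<le> lsym M N H (mix t y1 y2)"
proof -
  have "(1 - t) * lsym M N H y1 + t * lsym M N H y2 =
        cc * (\<Sum>l\<in>L. (1 - t) * loss N H (\<lambda>k. y1 (l k)) + t * loss N H (\<lambda>k. y2 (l k)))"
  proof -
    have "(\<Sum>l\<in>L. (1 - t) * loss N H (\<lambda>k. y1 (l k)) + t * loss N H (\<lambda>k. y2 (l k)))
        = (1 - t) * (\<Sum>l\<in>L. loss N H (\<lambda>k. y1 (l k))) + t * (\<Sum>l\<in>L. loss N H (\<lambda>k. y2 (l k)))"
      using sum_comb[of "\<lambda>_. 1" t "\<lambda>l. loss N H (\<lambda>k. y1 (l k))" "\<lambda>l. loss N H (\<lambda>k. y2 (l k))" L] by simp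
    then show ?thesis unfolding lsym_L[OF NM] cc_def[symmetric] L_def[symmetric] by (simp add: distrib_left)
  qed
  also have "\<dots> \<le> cc * (\<Sum>l\<in>L. loss N H (\<lambda>k. mix t y1 y2 (l k)))"
    using cc_pos by (intro mult_left_mono sum_mono) (auto simp: mix_def intro: loss_concave[OF V HV assms])
  also have "\<dots> = lsym M N H (mix t y1 y2)"
    unfolding lsym_L[OF NM] cc_def[symmetric] L_def[symmetric] ..
  finally show ?thesis .
qed

lemma cost_convex:
  assumes "0 \<le> t" "t \<le> 1"
  shows "costM nrm M (mix t y1 y2) \<xi> \<le> (1 - t) * costM nrm M y1 \<xi> + t * costM nrm M y2 \<xi>"
proof -
  have "nrm (mix t y1 y2 j - \<xi> j) \<le> (1 - t) * nrm (y1 j - \<xi> j) + t * nrm (y2 j - \<xi> j)" for j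
  proof -
    have "mix t y1 y2 j - \<xi> j = (1 - t) *\<^sub>R (y1 j - \<xi> j) + t *\<^sub>R (y2 j - \<xi> j)"
      unfolding mix_def by (simp add: algebra_simps)
    then show ?thesis using nrm_tri[OF nrm] nrm_scale[OF nrm] assms by (metis abs_of_nonneg diff_ge_0_iff_ge)
  qed
  then show ?thesis unfolding costM_def by (simp add: sum_distrib_left sum.distrib[symmetric] sum_mono)
qed

definition "Phi x = (\<Sum>\<iota>\<in>Icls M np. p_cls M p \<iota> * lsym M N H (x \<iota>))"
definition "G x = (\<Sum>\<iota>\<in>Icls M np. p_cls M p \<iota> * costM nrm M (x \<iota>) (xt (\<upsilon> \<iota>)))"

lemma pcls_nn: "\<iota> \<in> Icls M np \<Longrightarrow> 0 \<le> p_cls M p \<iota>"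
  using p_cls_pos[OF ppos] by (simp add: less_imp_le)

lemma G_x0: "G (\<lambda>\<iota>. xt (\<upsilon> \<iota>)) = 0" unfolding G_def costM_def by (simp add: nrm_0[OF nrm])

lemma outer:
  assumes u: "\<And>x. G x \<le> real M * \<rho> \<Longrightarrow> Phi x \<le> u" and e: "e > 0"
  shows "\<exists>\<mu>\<ge>0. \<forall>x. Phi x - \<mu> * G x \<le> u + e - \<mu> * (real M * \<rho>)"
proof -
  define A where "A = {st :: real \<times> real. \<exists>x. G x \<le> fst st \<and> snd st \<le> Phi x}"
  define z0 where "z0 = (real M * \<rho>, u + e)"
  have cA: "convex A"
    unfolding convex_def
  proof (intro ballI allI impI)
    fix a b :: "real \<times> real" and r1 r2 :: real
    assume a: "a \<in> A" and b: "b \<in> A" and r: "0 \<le> r1" "0 \<le> r2" "r1 + r2 = 1"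
    obtain x1 where x1: "G x1 \<le> fst a" "snd a \<le> Phi x1" using a unfolding A_def by auto
    obtain x2 where x2: "G x2 \<le> fst b" "snd b \<le> Phi x2" using b unfolding A_def by auto
    define x where "x \<iota> = mix r2 (x1 \<iota>) (x2 \<iota>)" for \<iota>
    have r1e: "r1 = 1 - r2" using r by simp
    have r2le: "r2 \<le> 1" using r by simp
    have "G x \<le> r1 * G x1 + r2 * G x2"
    proof -
      have "G x \<le> (\<Sum>\<iota>\<in>Icls M np. p_cls M p \<iota> * ((1 - r2) * costM nrm M (x1 \<iota>) (xt (\<upsilon> \<iota>)) + r2 * costM nrm M (x2 \<iota>) (xt (\<upsilon> \<iota>))))"
        unfolding G_def x_def by (intro sum_mono mult_left_mono cost_convex pcls_nn) (use r r2le in auto)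
      also have "\<dots> = r1 * G x1 + r2 * G x2" unfolding G_def r1e by (rule sum_comb)
      finally show ?thesis .
    qed
    also have "\<dots> \<le> r1 * fst a + r2 * fst b" using x1 x2 r by (intro add_mono mult_left_mono) auto
    finally have g: "G x \<le> fst (r1 *\<^sub>R a + r2 *\<^sub>R b)" by simp
    have "snd (r1 *\<^sub>R a + r2 *\<^sub>R b) \<le> r1 * Phi x1 + r2 * Phi x2" using x1 x2 r by (simp add: add_mono mult_left_mono)
    also have "\<dots> \<le> Phi x"
    proof -
      have "r1 * Phi x1 + r2 * Phi x2 = (\<Sum>\<iota>\<in>Icls M np. p_cls M p \<iota> * ((1 - r2) * lsym M N H (x1 \<iota>) + r2 * lsym M N H (x2 \<iota>)))"
        unfolding Phi_def r1e by (rule sum_comb[symmetric])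
      also have "\<dots> \<le> Phi x"
        unfolding Phi_def x_def by (intro sum_mono mult_left_mono lsym_concave pcls_nn) (use r r2le in auto)
      finally show ?thesis .
    qed
    finally have "snd (r1 *\<^sub>R a + r2 *\<^sub>R b) \<le> Phi x" .
    with g show "r1 *\<^sub>R a + r2 *\<^sub>R b \<in> A" unfolding A_def
      by (cases "r1 *\<^sub>R a + r2 *\<^sub>R b") auto
  qed
  have nz: "0 \<notin> (\<lambda>a. a - z0) ` A"
  proof
    assume "0 \<in> (\<lambda>a. a - z0) ` A"
    then have "z0 \<in> A" by auto
    then obtain x where "G x \<le> real M * \<rho>" "u + e \<le> Phi x" unfolding A_def z0_def by auto
    then show False using u e by fastforce
  qed
  obtain ab where ab: "ab \<noteq> 0" "\<forall>y\<in>(\<lambda>a. a - z0) ` A. 0 \<le> ab \<bullet> y"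
    using separating_hyperplane_set_0[OF convex_translation_subtract[OF cA] nz] by blast
  obtain \<alpha> \<beta> where ab_eq: "ab = (\<alpha>, \<beta>)" by (cases ab)
  have key: "0 \<le> \<alpha> * (s - real M * \<rho>) + \<beta> * (t - (u + e))" if "(s, t) \<in> A" for s t
    using ab(2) that unfolding ab_eq z0_def by (force simp: inner_Pair)
  define x0 where "x0 = (\<lambda>\<iota>. xt (\<upsilon> \<iota>))"
  define \<Phi>0 where "\<Phi>0 = Phi x0"
  have inA: "(r, \<Phi>0 - r') \<in> A" if "0 \<le> r" "0 \<le> r'" for r r'
    unfolding A_def \<Phi>0_def using that G_x0 unfolding x0_def by (auto intro!: exI[of _ "\<lambda>\<iota>. xt (\<upsilon> \<iota>)"])
  have a0: "\<alpha> \<ge> 0"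
  proof (rule ccontr)
    assume "\<not> \<alpha> \<ge> 0"
    then have al: "\<alpha> < 0" by simp
    define K0 where "K0 = - \<alpha> * (real M * \<rho>) + \<beta> * (\<Phi>0 - (u + e))"
    define R where "R = max 0 ((K0 + 1) / (- \<alpha>))"
    have "0 \<le> \<alpha> * R + K0" using key[OF inA[of R 0]] unfolding R_def K0_def by (simp add: algebra_simps)
    moreover have "\<alpha> * R \<le> - (K0 + 1)"
    proof -
      have "(K0 + 1) / (- \<alpha>) \<le> R" unfolding R_def by simp
      then have "(- \<alpha>) * ((K0 + 1) / (- \<alpha>)) \<le> (- \<alpha>) * R" using al by (intro mult_left_mono) auto
      then show ?thesis using al by simp
    qed
    ultimately show False by simp
  qed
  have b0: "\<beta> \<le> 0"
  proof (rule ccontr)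
    assume "\<not> \<beta> \<le> 0"
    then have bl: "\<beta> > 0" by simp
    define K0 where "K0 = - \<alpha> * (real M * \<rho>) + \<beta> * (\<Phi>0 - (u + e))"
    define R where "R = max 0 ((K0 + 1) / \<beta>)"
    have "0 \<le> K0 - \<beta> * R" using key[OF inA[of 0 R]] unfolding R_def K0_def by (simp add: algebra_simps)
    moreover have "\<beta> * R \<ge> K0 + 1"
    proof -
      have "(K0 + 1) / \<beta> \<le> R" unfolding R_def by simp
      then have "\<beta> * ((K0 + 1) / \<beta>) \<le> \<beta> * R" using bl by (intro mult_left_mono) auto
      then show ?thesis using bl by simp
    qed
    ultimately show False by simp
  qed
  have Mpos: "real M * \<rho> > 0" using N1 NM rho by simp
  have bn: "\<beta> \<noteq> 0"
  proof
    assume b: "\<beta> = 0"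
    then have "\<alpha> \<noteq> 0" using ab unfolding ab_eq by (auto simp: zero_prod_def)
    then have "\<alpha> > 0" using a0 by simp
    moreover have "0 \<le> \<alpha> * (0 - real M * \<rho>)" using key[OF inA[of 0 0]] b by simp
    ultimately show False using Mpos by (metis add.inverse_neutral diff_0 minus_mult_right mult_pos_pos neg_0_le_iff_le not_less)
  qed
  have bneg: "\<beta> < 0" using b0 bn by simp
  define \<mu> where "\<mu> = \<alpha> / (- \<beta>)"
  have mu0: "\<mu> \<ge> 0" unfolding \<mu>_def using a0 bneg by (intro divide_nonneg_pos) auto
  show ?thesis
  proof (intro exI[of _ \<mu>] conjI mu0 allI)
    fix x
    have "(G x, Phi x) \<in> A" unfolding A_def by auto
    then have k: "0 \<le> \<alpha> * (G x - real M * \<rho>) + \<beta> * (Phi x - (u + e))" by (rule key)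
    have "0 \<le> (\<alpha> * (G x - real M * \<rho>) + \<beta> * (Phi x - (u + e))) / (- \<beta>)" using k bneg by (intro divide_nonneg_pos) auto
    also have "\<dots> = \<mu> * (G x - real M * \<rho>) - (Phi x - (u + e))"
      unfolding \<mu>_def using bneg by (simp add: field_simps)
    finally show "Phi x - \<mu> * G x \<le> u + e - \<mu> * (real M * \<rho>)" by (simp add: algebra_simps)
  qed
qed

end

context setting begin

lemma sum2_comb:
  "(\<Sum>l\<in>A. \<Sum>v\<in>B. ((1 - t) * a l v + t * b l v) * (h l v::real)) =
   (1 - t) * (\<Sum>l\<in>A. \<Sum>v\<in>B. a l v * h l v) + t * (\<Sum>l\<in>A. \<Sum>v\<in>B. b l v * h l v)"
proof -
  have "(\<Sum>l\<in>A. \<Sum>v\<in>B. ((1 - t) * a l v + t * b l v) * h l v) =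
        (\<Sum>l\<in>A. (1 - t) * (\<Sum>v\<in>B. a l v * h l v) + t * (\<Sum>v\<in>B. b l v * h l v))"
  proof (intro sum.cong refl)
    fix l
    have "(\<Sum>v\<in>B. h l v * ((1 - t) * a l v + t * b l v)) = (1 - t) * (\<Sum>v\<in>B. h l v * a l v) + t * (\<Sum>v\<in>B. h l v * b l v)"
      by (rule sum_comb)
    then show "(\<Sum>v\<in>B. ((1 - t) * a l v + t * b l v) * h l v) = (1 - t) * (\<Sum>v\<in>B. a l v * h l v) + t * (\<Sum>v\<in>B. b l v * h l v)"
      by (simp add: mult.commute)
  qed
  also have "\<dots> = (1 - t) * (\<Sum>l\<in>A. \<Sum>v\<in>B. a l v * h l v) + t * (\<Sum>l\<in>A. \<Sum>v\<in>B. b l v * h l v)"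
    by (simp add: sum.distrib sum_distrib_left)
  finally show ?thesis .
qed

lemma max_comb: "0 \<le> t \<Longrightarrow> t \<le> 1 \<Longrightarrow> (1 - t) * a + t * b \<le> max a (b::real)"
proof -
  assume t: "0 \<le> t" "t \<le> 1"
  have "(1 - t) * a + t * b \<le> (1 - t) * max a b + t * max a b"
    using t by (intro add_mono mult_left_mono) auto
  then show ?thesis by (simp add: algebra_simps)
qed

lemma min_comb: "0 \<le> t \<Longrightarrow> t \<le> 1 \<Longrightarrow> min a (b::real) \<le> (1 - t) * a + t * b"
proof -
  assume t: "0 \<le> t" "t \<le> 1"
  have "(1 - t) * min a b + t * min a b \<le> (1 - t) * a + t * b"
    using t by (intro add_mono mult_left_mono) auto
  then show ?thesis by (simp add: algebra_simps)
qed

end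

context setting begin

lemma inner_weights:
  fixes \<xi> :: "nat \<Rightarrow> real^'n" and \<mu> \<psi> :: real
  assumes mu: "0 \<le> \<mu>" and F: "\<forall>y. lsym M N H y - \<mu> * costM nrm M y \<xi> \<le> \<psi>"
  defines "f \<equiv> \<lambda>(wt :: ((nat \<Rightarrow> nat) \<times> ((nat \<Rightarrow> real^'n) \<times> real)) \<Rightarrow> real) (y :: nat \<Rightarrow> real^'n).
      cc * (\<Sum>l\<in>L. \<Sum>v\<in>V. wt (l, v) * lin N v (\<lambda>k. \<xi> (l k) + y (l k))) - \<mu> * (\<Sum>j<M. nrm (y j))"
    and "K \<equiv> {wt :: ((nat \<Rightarrow> nat) \<times> ((nat \<Rightarrow> real^'n) \<times> real)) \<Rightarrow> real.
              (\<forall>q. 0 \<le> wt q \<and> wt q \<le> 1) \<and> (\<forall>l\<in>L. (\<Sum>v\<in>V. wt (l, v)) = 1)}"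
  shows "\<exists>wt\<in>K. \<forall>y. f wt y \<le> \<psi>"
proof -
  define comb where "comb t a b = (\<lambda>q. (1 - t) * a q + t * (b q :: real))"
    for t and a b :: "((nat \<Rightarrow> nat) \<times> ((nat \<Rightarrow> real^'n) \<times> real)) \<Rightarrow> real"
  define T where "T wt y = (\<Sum>l\<in>L. \<Sum>v\<in>V. wt (l, v) * lin N v (\<lambda>k. \<xi> (l k) + y (l k)))" for wt y
  have fT: "f wt y = cc * T wt y - \<mu> * (\<Sum>j<M. nrm (y j))" for wt y unfolding f_def T_def by simp
  have T_comb: "T (comb t a b) y = (1 - t) * T a y + t * T b y" for t a b y
    unfolding T_def comb_def by (rule sum2_comb)
  have lin_mix: "lin N v (\<lambda>k. \<xi> (l k) + mix t y1 y2 (l k)) =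
      (1 - t) * lin N v (\<lambda>k. \<xi> (l k) + y1 (l k)) + t * lin N v (\<lambda>k. \<xi> (l k) + y2 (l k))" for v l t y1 y2
  proof -
    have "(\<lambda>k. \<xi> (l k) + mix t y1 y2 (l k)) = (\<lambda>k. (1 - t) *\<^sub>R (\<xi> (l k) + y1 (l k)) + t *\<^sub>R (\<xi> (l k) + y2 (l k)))"
      unfolding mix_def by (simp add: fun_eq_iff algebra_simps)
    then show ?thesis by (simp add: lin_affine)
  qed
  have T_mix: "T wt (mix t y1 y2) = (1 - t) * T wt y1 + t * T wt y2" for wt t y1 y2
  proof -
    have "T wt (mix t y1 y2) = (\<Sum>l\<in>L. \<Sum>v\<in>V. wt (l, v) * ((1 - t) * lin N v (\<lambda>k. \<xi> (l k) + y1 (l k)) + t * lin N v (\<lambda>k. \<xi> (l k) + y2 (l k))))"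
      unfolding T_def lin_mix ..
    also have "\<dots> = (\<Sum>l\<in>L. (1 - t) * (\<Sum>v\<in>V. wt (l, v) * lin N v (\<lambda>k. \<xi> (l k) + y1 (l k))) + t * (\<Sum>v\<in>V. wt (l, v) * lin N v (\<lambda>k. \<xi> (l k) + y2 (l k))))"
      by (intro sum.cong refl sum_comb)
    also have "\<dots> = (1 - t) * T wt y1 + t * T wt y2" unfolding T_def by (simp add: sum.distrib sum_distrib_left)
    finally show ?thesis .
  qed
  have nrm_mix: "(\<Sum>j<M. nrm (mix t y1 y2 j)) \<le> (1 - t) * (\<Sum>j<M. nrm (y1 j)) + t * (\<Sum>j<M. nrm (y2 j))"
    if t: "0 \<le> t" "t \<le> 1" for t y1 y2
  proof -
    have "nrm (mix t y1 y2 j) \<le> (1 - t) * nrm (y1 j) + t * nrm (y2 j)" for j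
      unfolding mix_def using nrm_tri[OF nrm] nrm_scale[OF nrm] t by (metis abs_of_nonneg diff_ge_0_iff_ge)
    then have "(\<Sum>j<M. nrm (mix t y1 y2 j)) \<le> (\<Sum>j<M. (1 - t) * nrm (y1 j) + t * nrm (y2 j))" by (rule sum_mono)
    also have "\<dots> = (1 - t) * (\<Sum>j<M. nrm (y1 j)) + t * (\<Sum>j<M. nrm (y2 j))" by (simp add: sum.distrib sum_distrib_left)
    finally show ?thesis .
  qed
  interpret S: sion_setting comb mix f
  proof
    fix a b :: "((nat \<Rightarrow> nat) \<times> ((nat \<Rightarrow> real^'n) \<times> real)) \<Rightarrow> real"
    show "continuous_on {0..1} (\<lambda>t. comb t a b)"
      unfolding comb_def by (intro continuous_on_coordinatewise_then_product continuous_intros)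
    show "comb 0 a b = a" "comb 1 a b = b" unfolding comb_def by auto
  next
    fix a b :: "nat \<Rightarrow> real^'n"
    show "mix 0 a b = a" "mix 1 a b = b" unfolding mix_def by auto
  next
    fix y :: "nat \<Rightarrow> real^'n"
    show "continuous_on UNIV (\<lambda>x. f x y)"
      unfolding f_def by (intro continuous_intros continuous_on_product_coordinates) 
  next
    fix y :: "nat \<Rightarrow> real^'n" and a b and t :: real assume t: "t \<in> {0..1}"
    have "f (comb t a b) y = (1 - t) * f a y + t * f b y" unfolding fT T_comb by (simp add: algebra_simps)
    then show "f (comb t a b) y \<le> max (f a y) (f b y)" using max_comb t by auto
  next
    fix x and y1 y2 :: "nat \<Rightarrow> real^'n"
    show "continuous_on {0..1} (\<lambda>t. f x (mix t y1 y2))"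
      unfolding f_def mix_def lin_def
      by (intro continuous_intros nrm_cont'[OF nrm])
  next
    fix x and y1 y2 :: "nat \<Rightarrow> real^'n" and t :: real assume t: "t \<in> {0..1}"
    have "(1 - t) * f x y1 + t * f x y2 \<le> f x (mix t y1 y2)"
    proof -
      have "(1 - t) * f x y1 + t * f x y2 = cc * T x (mix t y1 y2) - \<mu> * ((1 - t) * (\<Sum>j<M. nrm (y1 j)) + t * (\<Sum>j<M. nrm (y2 j)))"
        unfolding fT T_mix by (simp add: algebra_simps)
      also have "\<dots> \<le> f x (mix t y1 y2)" unfolding fT
        using nrm_mix[of t y1 y2] t mu by (auto intro: mult_left_mono)
      finally show ?thesis .
    qed
    then show "min (f x y1) (f x y2) \<le> f x (mix t y1 y2)" using min_comb t by (smt (verit) atLeastAtMost_iff)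
  qed
  have compK: "compact K"
  proof -
    have c1: "compact (Pi UNIV (\<lambda>_::((nat \<Rightarrow> nat) \<times> ((nat \<Rightarrow> real^'n) \<times> real)). {0..1::real}))"
    proof -
      have "compactin (product_topology (\<lambda>_. euclidean) UNIV) (PiE UNIV (\<lambda>_::((nat \<Rightarrow> nat) \<times> ((nat \<Rightarrow> real^'n) \<times> real)). {0..1::real}))"
        by (subst compactin_PiE) auto
      then show ?thesis by (simp add: euclidean_product_topology PiE_UNIV_domain compactin_euclidean_iff)
    qed
    have c2: "closed (\<Inter>l\<in>L. {wt :: ((nat \<Rightarrow> nat) \<times> ((nat \<Rightarrow> real^'n) \<times> real)) \<Rightarrow> real. (\<Sum>v\<in>V. wt (l, v)) = 1})"
      by (intro closed_INT ballI closed_Collect_eq continuous_intros continuous_on_product_coordinates)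
    have "K = Pi UNIV (\<lambda>_. {0..1}) \<inter> (\<Inter>l\<in>L. {wt. (\<Sum>v\<in>V. wt (l, v)) = 1})"
      unfolding K_def by auto
    then show ?thesis using compact_Int_closed[OF c1 c2] by simp
  qed
  have cvK: "ccvx comb K"
    unfolding ccvx_def K_def
  proof (intro ballI CollectI conjI allI)
    fix a b :: "((nat \<Rightarrow> nat) \<times> ((nat \<Rightarrow> real^'n) \<times> real)) \<Rightarrow> real" and t :: real and q
    assume a: "a \<in> {wt. (\<forall>q. 0 \<le> wt q \<and> wt q \<le> 1) \<and> (\<forall>l\<in>L. (\<Sum>v\<in>V. wt (l, v)) = 1)}"
      and b: "b \<in> {wt. (\<forall>q. 0 \<le> wt q \<and> wt q \<le> 1) \<and> (\<forall>l\<in>L. (\<Sum>v\<in>V. wt (l, v)) = 1)}"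
      and t: "t \<in> {0..1::real}"
    have aq: "0 \<le> a q \<and> a q \<le> 1" using a by blast
    have bq: "0 \<le> b q \<and> b q \<le> 1" using b by blast
    have "0 \<le> (1 - t) * a q + t * b q" using aq bq t by (intro add_nonneg_nonneg mult_nonneg_nonneg) auto
    then show "0 \<le> comb t a b q" unfolding comb_def .
    have "(1 - t) * a q + t * b q \<le> max (a q) (b q)" using max_comb t by auto
    then show "comb t a b q \<le> 1" unfolding comb_def using aq bq by auto
  next
    fix a b :: "((nat \<Rightarrow> nat) \<times> ((nat \<Rightarrow> real^'n) \<times> real)) \<Rightarrow> real" and t :: real and l
    assume a: "a \<in> {wt. (\<forall>q. 0 \<le> wt q \<and> wt q \<le> 1) \<and> (\<forall>l\<in>L. (\<Sum>v\<in>V. wt (l, v)) = 1)}"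
      and b: "b \<in> {wt. (\<forall>q. 0 \<le> wt q \<and> wt q \<le> 1) \<and> (\<forall>l\<in>L. (\<Sum>v\<in>V. wt (l, v)) = 1)}"
      and t: "t \<in> {0..1::real}" and l: "l \<in> L"
    show "(\<Sum>v\<in>V. comb t a b (l, v)) = 1"
      unfolding comb_def using a b l by (simp add: sum.distrib sum_distrib_left[symmetric])
  qed
  have hyp: "\<forall>y. \<exists>wt\<in>K. f wt y \<le> \<psi>"
  proof
    fix y :: "nat \<Rightarrow> real^'n"
    define vs where "vs l = (SOME v. v \<in> V \<and> loss N H (\<lambda>k. \<xi> (l k) + y (l k)) = lin N v (\<lambda>k. \<xi> (l k) + y (l k)))" for l
    have vs: "vs l \<in> V \<and> loss N H (\<lambda>k. \<xi> (l k) + y (l k)) = lin N (vs l) (\<lambda>k. \<xi> (l k) + y (l k))" for l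
      unfolding vs_def using loss_attained[OF V HV] by (metis (mono_tags, lifting) someI_ex)
    define wt where "wt q = (if fst q \<in> L \<and> snd q = vs (fst q) then 1 else (0::real))" for q
    have wK: "wt \<in> K" unfolding K_def wt_def using vs V(1)
      by (auto simp: sum.delta' if_distrib cong: if_cong)
    have "f wt y = cc * (\<Sum>l\<in>L. loss N H (\<lambda>k. \<xi> (l k) + y (l k))) - \<mu> * (\<Sum>j<M. nrm (y j))"
    proof -
      have "(\<Sum>v\<in>V. wt (l, v) * lin N v (\<lambda>k. \<xi> (l k) + y (l k))) = loss N H (\<lambda>k. \<xi> (l k) + y (l k))" if l: "l \<in> L" for l
      proof -
        have "(\<Sum>v\<in>V. wt (l, v) * lin N v (\<lambda>k. \<xi> (l k) + y (l k))) = (\<Sum>v\<in>V. if v = vs l then lin N v (\<lambda>k. \<xi> (l k) + y (l k)) else 0)"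
          by (intro sum.cong refl) (simp add: wt_def l)
        also have "\<dots> = lin N (vs l) (\<lambda>k. \<xi> (l k) + y (l k))" using vs[of l] V(1) by (simp add: sum.delta')
        finally show ?thesis using vs[of l] by simp
      qed
      then show ?thesis unfolding f_def by simp
    qed
    also have "\<dots> = lsym M N H (\<lambda>j. \<xi> j + y j) - \<mu> * costM nrm M (\<lambda>j. \<xi> j + y j) \<xi>"
      unfolding lsym_L[OF NM] cc_def[symmetric] L_def[symmetric] costM_def by simp
    also have "\<dots> \<le> \<psi>" using F by blast
    finally show "\<exists>wt\<in>K. f wt y \<le> \<psi>" using wK by blast
  qed
  show ?thesis by (rule S.sion[OF compK cvK hyp])
qed

end

context setting begin

lemma zsum:
  assumes c3: "z0 = (\<lambda>j. if j < M then cc *\<^sub>R (\<Sum>l\<in>L. selT M N l (a0 l) j) else undefined)"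
  shows "(\<Sum>j<M. z0 j \<bullet> x j) = cc * (\<Sum>l\<in>L. \<Sum>k<N. a0 l k \<bullet> x (l k))"
proof -
  have "(\<Sum>j<M. z0 j \<bullet> x j) = cc * (\<Sum>j<M. \<Sum>l\<in>L. selT M N l (a0 l) j \<bullet> x j)"
    unfolding c3 by (simp add: inner_sum_left sum_distrib_left)
  also have "\<dots> = cc * (\<Sum>l\<in>L. \<Sum>k<N. a0 l k \<bullet> x (l k))"
    by (subst sum.swap) (simp add: sum_selT)
  finally show ?thesis .
qed

lemma inner:
  fixes \<xi> :: "nat \<Rightarrow> real^'n" and \<mu> \<psi> :: real
  assumes mu: "0 \<le> \<mu>" and F: "\<forall>y. lsym M N H y - \<mu> * costM nrm M y \<xi> \<le> \<psi>"
  shows "\<exists>\<sigma>0 z0 a0 b0. \<sigma>0 \<le> \<psi> \<and> 0 \<le> \<sigma>0 + (\<Sum>j<M. z0 j \<bullet> \<xi> j) + cc * (\<Sum>l\<in>L. b0 l)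
     \<and> (\<forall>j<M. dual_norm nrm (z0 j) \<le> \<mu>)
     \<and> z0 = (\<lambda>j. if j < M then cc *\<^sub>R (\<Sum>l\<in>L. selT M N l (a0 l) j) else undefined)
     \<and> (\<forall>l\<in>L. ((\<lambda>k. if k < N then - a0 l k else undefined), - b0 l) \<in> H)"
proof -
  define f where "f \<equiv> \<lambda>(wt :: ((nat \<Rightarrow> nat) \<times> ((nat \<Rightarrow> real^'n) \<times> real)) \<Rightarrow> real) (y :: nat \<Rightarrow> real^'n).
      cc * (\<Sum>l\<in>L. \<Sum>v\<in>V. wt (l, v) * lin N v (\<lambda>k. \<xi> (l k) + y (l k))) - \<mu> * (\<Sum>j<M. nrm (y j))"
  define K where "K \<equiv> {wt :: ((nat \<Rightarrow> nat) \<times> ((nat \<Rightarrow> real^'n) \<times> real)) \<Rightarrow> real.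
              (\<forall>q. 0 \<le> wt q \<and> wt q \<le> 1) \<and> (\<forall>l\<in>L. (\<Sum>v\<in>V. wt (l, v)) = 1)}"
  obtain wt where wK: "wt \<in> K" and wf: "\<forall>y. f wt y \<le> \<psi>"
    using inner_weights[OF mu F] unfolding f_def K_def by blast
  have w0: "\<forall>q. 0 \<le> wt q" and w1: "\<forall>l\<in>L. (\<Sum>v\<in>V. wt (l, v)) = 1" using wK unfolding K_def by auto
  define h where "h l = hw N V (\<lambda>v. wt (l, v))" for l
  have hH: "h l \<in> H" if "l \<in> L" for l
    unfolding h_def using w0 w1 that by (intro hw_in_H[OF V HV]) auto
  define a0 where "a0 l = (\<lambda>k. - fst (h l) k)" for l
  define b0 where "b0 l = - snd (h l)" for l
  define z0 where "z0 = (\<lambda>j. if j < M then cc *\<^sub>R (\<Sum>l\<in>L. selT M N l (a0 l) j) else undefined)"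
  define \<sigma>0 where "\<sigma>0 = - (\<Sum>j<M. z0 j \<bullet> \<xi> j) - cc * (\<Sum>l\<in>L. b0 l)"
  have Hmem: "\<forall>l\<in>L. ((\<lambda>k. if k < N then - a0 l k else undefined), - b0 l) \<in> H"
  proof
    fix l assume l: "l \<in> L"
    have "((\<lambda>k. if k < N then - a0 l k else undefined), - b0 l) = h l"
      unfolding a0_def b0_def h_def hw_def by (simp add: fun_eq_iff)
    then show "((\<lambda>k. if k < N then - a0 l k else undefined), - b0 l) \<in> H" using hH[OF l] by simp
  qed
  have fform: "f wt y = \<sigma>0 - (\<Sum>j<M. z0 j \<bullet> y j) - \<mu> * (\<Sum>j<M. nrm (y j))" for y
  proof -
    have "(\<Sum>v\<in>V. wt (l, v) * lin N v (\<lambda>k. \<xi> (l k) + y (l k))) =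
          - (\<Sum>k<N. a0 l k \<bullet> \<xi> (l k)) - (\<Sum>k<N. a0 l k \<bullet> y (l k)) - b0 l" if l: "l \<in> L" for l
    proof -
      have "(\<Sum>v\<in>V. wt (l, v) * lin N v (\<lambda>k. \<xi> (l k) + y (l k))) = lin N (h l) (\<lambda>k. \<xi> (l k) + y (l k))"
        unfolding h_def using lin_hw[OF V(1) w1[rule_format, OF l]] by simp
      also have "\<dots> = (\<Sum>k<N. fst (h l) k \<bullet> (\<xi> (l k) + y (l k))) + snd (h l)" unfolding lin_def ..
      also have "\<dots> = - (\<Sum>k<N. a0 l k \<bullet> \<xi> (l k)) - (\<Sum>k<N. a0 l k \<bullet> y (l k)) - b0 l"
        unfolding a0_def b0_def by (simp add: inner_add_right sum.distrib sum_negf)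
      finally show ?thesis .
    qed
    then have "f wt y = cc * (\<Sum>l\<in>L. - (\<Sum>k<N. a0 l k \<bullet> \<xi> (l k)) - (\<Sum>k<N. a0 l k \<bullet> y (l k)) - b0 l) - \<mu> * (\<Sum>j<M. nrm (y j))"
      unfolding f_def by simp
    also have "\<dots> = - (cc * (\<Sum>l\<in>L. \<Sum>k<N. a0 l k \<bullet> \<xi> (l k))) - cc * (\<Sum>l\<in>L. \<Sum>k<N. a0 l k \<bullet> y (l k)) - cc * (\<Sum>l\<in>L. b0 l) - \<mu> * (\<Sum>j<M. nrm (y j))"
      by (simp add: sum_subtractf sum_negf sum.distrib algebra_simps)
    also have "\<dots> = \<sigma>0 - (\<Sum>j<M. z0 j \<bullet> y j) - \<mu> * (\<Sum>j<M. nrm (y j))"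
      unfolding \<sigma>0_def zsum[OF z0_def] by simp
    finally show ?thesis .
  qed
  have sig: "\<sigma>0 \<le> \<psi>" using wf[rule_format, of "\<lambda>_. 0"] fform[of "\<lambda>_. 0"] by (simp add: nrm_0[OF nrm])
  have dn: "\<forall>j<M. dual_norm nrm (z0 j) \<le> \<mu>"
  proof (intro allI impI)
    fix j0 assume j0: "j0 < M"
    show "dual_norm nrm (z0 j0) \<le> \<mu>"
    proof (rule ccontr)
      assume "\<not> ?thesis"
      then obtain x0 where x0: "nrm x0 \<le> 1" "z0 j0 \<bullet> x0 > \<mu>" using dual_gt[OF nrm] by (meson not_le)
      define g where "g = z0 j0 \<bullet> x0 - \<mu>"
      have g: "g > 0" using x0 unfolding g_def by simp
      define T where "T = (\<bar>\<psi> - \<sigma>0\<bar> + 1) / g"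
      have T: "T > 0" unfolding T_def using g by simp
      define y where "y j = (if j = j0 then (- T) *\<^sub>R x0 else 0)" for j
      have s1: "(\<Sum>j<M. z0 j \<bullet> y j) = - T * (z0 j0 \<bullet> x0)"
        using j0 unfolding y_def by (simp add: if_distrib[of "\<lambda>v. z0 _ \<bullet> v"] sum.delta cong: if_cong)
      have s2: "(\<Sum>j<M. nrm (y j)) = T * nrm x0"
        using j0 T unfolding y_def by (simp add: if_distrib[of nrm] sum.delta nrm_scale[OF nrm] nrm_minus[OF nrm] nrm_0[OF nrm] cong: if_cong)
      have "f wt y = \<sigma>0 + T * (z0 j0 \<bullet> x0) - \<mu> * (T * nrm x0)" using fform[of y] s1 s2 by simp
      also have "\<dots> \<ge> \<sigma>0 + T * (z0 j0 \<bullet> x0) - \<mu> * T"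
        using mu T x0(1) by (simp add: mult_left_mono)
      moreover have "\<sigma>0 + T * (z0 j0 \<bullet> x0) - \<mu> * T = \<sigma>0 + T * g" unfolding g_def by (simp add: algebra_simps)
      moreover have "T * g = \<bar>\<psi> - \<sigma>0\<bar> + 1" unfolding T_def using g by simp
      ultimately have "f wt y \<ge> \<sigma>0 + \<bar>\<psi> - \<sigma>0\<bar> + 1" by linarith
      then show False using wf by (smt (verit))
    qed
  qed
  show ?thesis
    by (intro exI[of _ \<sigma>0] exI[of _ z0] exI[of _ a0] exI[of _ b0] conjI sig dn Hmem z0_def)
      (simp add: \<sigma>0_def)
qed

end

context setting begin

lemma feas_unfold:
  "(0 \<le> \<sigma>0 + (\<Sum>j<M. z0 j \<bullet> xi_tuple M xi (\<upsilon> \<iota>) j) + (fact (M - N) / fact M) * (\<Sum>l\<in>Lset M N. b0 l)) =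
   (0 \<le> \<sigma>0 + (\<Sum>j<M. z0 j \<bullet> xt (\<upsilon> \<iota>) j) + cc * (\<Sum>l\<in>L. b0 l))"
  "(z0 = (\<lambda>j. if j < M then (fact (M - N) / fact M) *\<^sub>R (\<Sum>l\<in>Lset M N. selT M N l (a0 l) j) else undefined)) =
   (z0 = (\<lambda>j. if j < M then cc *\<^sub>R (\<Sum>l\<in>L. selT M N l (a0 l) j) else undefined))"
  "(\<forall>l\<in>Lset M N. P l) = (\<forall>l\<in>L. P l)"
  unfolding xt_def L_def cc_def by simp_all

lemma upper: "U_sym nrm M N \<rho> np p xi (loss N H) \<le> Inf (dual_values nrm M N \<rho> np p xi H \<upsilon>)"
proof (rule Inf_greatest)
  fix d assume "d \<in> dual_values nrm M N \<rho> np p xi H \<upsilon>"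
  then obtain \<mu> \<sigma> z a b where d: "d = ereal (\<mu> * real M * \<rho> + (\<Sum>\<iota>\<in>Icls M np. p_cls M p \<iota> * \<sigma> \<iota>))"
    and mu: "0 \<le> \<mu>"
    and fe: "\<forall>\<iota>\<in>Icls M np.
           0 \<le> \<sigma> \<iota> + (\<Sum>j<M. z \<iota> j \<bullet> xi_tuple M xi (\<upsilon> \<iota>) j)
                 + (fact (M - N) / fact M) * (\<Sum>l\<in>Lset M N. b l \<iota>)
         \<and> (\<forall>j<M. dual_norm nrm (z \<iota> j) \<le> \<mu>)
         \<and> z \<iota> = (\<lambda>j. if j < M then (fact (M - N) / fact M) *\<^sub>R (\<Sum>l\<in>Lset M N. selT M N l (a l \<iota>) j)
                       else undefined)
         \<and> (\<forall>l\<in>Lset M N. ((\<lambda>k. if k < N then - a l \<iota> k else undefined), - b l \<iota>) \<in> H)"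
    unfolding dual_values_def by blast
  have pt: "lsym M N H x \<le> \<mu> * costM nrm M x (xt i) + \<sigma> (cls M np i)" if i: "i \<in> Ihat M np" for i x
  proof -
    have \<iota>: "cls M np i \<in> Icls M np" by (rule cls_in[OF i])
    from fe[rule_format, OF \<iota>] show ?thesis unfolding feas_unfold
      by (intro wd_point[OF \<iota> cls_self[OF i]]) auto
  qed
  show "U_sym nrm M N \<rho> np p xi (loss N H) \<le> d"
    unfolding U_eq d
  proof (rule SUP_least)
    fix P assume "P \<in> ot_ball nrm M (real M * \<rho>) Q"
    then show "ereal (\<integral>x. lsym M N H x \<partial>P) \<le> ereal (\<mu> * real M * \<rho> + (\<Sum>\<iota>\<in>Icls M np. p_cls M p \<iota> * \<sigma> \<iota>))"
      using weak_duality[OF _ mu pt] by simp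
  qed
qed

lemma Phi_G: "Phi x - \<mu> * G x = (\<Sum>\<iota>\<in>Icls M np. p_cls M p \<iota> * (lsym M N H (x \<iota>) - \<mu> * costM nrm M (x \<iota>) (xt (\<upsilon> \<iota>))))"
  unfolding Phi_def G_def by (simp add: sum_distrib_left sum_subtractf algebra_simps)

lemma lower: "Inf (dual_values nrm M N \<rho> np p xi H \<upsilon>) \<le> U_sym nrm M N \<rho> np p xi (loss N H)"
proof -
  define U where "U = U_sym nrm M N \<rho> np p xi (loss N H)"
  define D where "D = dual_values nrm M N \<rho> np p xi H \<upsilon>"
  define x0 where "x0 = (\<lambda>\<iota>. xt (\<upsilon> \<iota>))"
  have Mr: "0 \<le> real M * \<rho>" using rho by simp
  have lbx: "ereal (Phi x) \<le> U" if "G x \<le> real M * \<rho>" for x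
    unfolding U_def Phi_def using lower_bound that unfolding G_def by blast
  show ?thesis
  proof (cases U)
    case PInf then show ?thesis unfolding U_def by simp
  next
    case MInf
    then show ?thesis using lbx[of x0] G_x0 Mr unfolding x0_def by simp
  next
    case (real u)
    have uprop: "Phi x \<le> u" if "G x \<le> real M * \<rho>" for x using lbx[OF that] real by simp
    have "Inf D \<le> ereal u"
    proof (rule ereal_le_epsilon2)
      fix e :: real assume e: "0 < e"
      define e' where "e' = e / 2"
      have e': "e' > 0" unfolding e'_def using e by simp
      obtain \<mu> where mu: "\<mu> \<ge> 0" and out: "\<forall>x. Phi x - \<mu> * G x \<le> u + e' - \<mu> * (real M * \<rho>)"
        using outer[OF uprop e'] by blast
      define F where "F \<iota> y = lsym M N H y - \<mu> * costM nrm M y (xt (\<upsilon> \<iota>))" for \<iota> y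
      have bdd: "bdd_above (range (F \<iota>0))" if \<iota>0: "\<iota>0 \<in> Icls M np" for \<iota>0
      proof -
        define R0 where "R0 = (\<Sum>\<iota>\<in>Icls M np - {\<iota>0}. p_cls M p \<iota> * lsym M N H (xt (\<upsilon> \<iota>)))"
        have pp: "p_cls M p \<iota>0 > 0" by (rule p_cls_pos[OF ppos \<iota>0])
        have "F \<iota>0 y \<le> (u + e' - \<mu> * (real M * \<rho>) - R0) / p_cls M p \<iota>0" for y
        proof -
          define x where "x \<iota> = (if \<iota> = \<iota>0 then y else xt (\<upsilon> \<iota>))" for \<iota>
          have "Phi x - \<mu> * G x = (\<Sum>\<iota>\<in>Icls M np. p_cls M p \<iota> * F \<iota> (x \<iota>))" unfolding Phi_G F_def ..
          also have "\<dots> = p_cls M p \<iota>0 * F \<iota>0 y + (\<Sum>\<iota>\<in>Icls M np - {\<iota>0}. p_cls M p \<iota> * F \<iota> (x \<iota>))"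
            using \<iota>0 finite_Icls by (subst sum.remove) (auto simp: x_def)
          also have "(\<Sum>\<iota>\<in>Icls M np - {\<iota>0}. p_cls M p \<iota> * F \<iota> (x \<iota>)) = R0"
            unfolding R0_def F_def x_def costM_def by (intro sum.cong refl) (auto simp: nrm_0[OF nrm])
          finally have "p_cls M p \<iota>0 * F \<iota>0 y \<le> u + e' - \<mu> * (real M * \<rho>) - R0" using out by smt
          then show ?thesis using pp by (simp add: field_simps)
        qed
        then show ?thesis by (intro bdd_aboveI2)
      qed
      define \<psi> where "\<psi> \<iota> = Sup (range (F \<iota>))" for \<iota>
      have Fle: "F \<iota> y \<le> \<psi> \<iota>" if "\<iota> \<in> Icls M np" for \<iota> y
        unfolding \<psi>_def by (rule cSUP_upper[OF _ bdd[OF that]]) simp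
      have sumpsi: "(\<Sum>\<iota>\<in>Icls M np. p_cls M p \<iota> * \<psi> \<iota>) \<le> u + 2 * e' - \<mu> * (real M * \<rho>)"
      proof -
        have "\<exists>y. \<psi> \<iota> - e' < F \<iota> y" if "\<iota> \<in> Icls M np" for \<iota>
        proof -
          have "\<psi> \<iota> - e' < \<psi> \<iota>" using e' by simp
          then show ?thesis unfolding \<psi>_def using less_cSUP_iff[OF _ bdd[OF that]] by blast
        qed
        then obtain ys where ys: "\<forall>\<iota>\<in>Icls M np. \<psi> \<iota> - e' < F \<iota> (ys \<iota>)" by metis
        have "(\<Sum>\<iota>\<in>Icls M np. p_cls M p \<iota> * \<psi> \<iota>) \<le> (\<Sum>\<iota>\<in>Icls M np. p_cls M p \<iota> * (F \<iota> (ys \<iota>) + e'))"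
          using ys by (intro sum_mono mult_left_mono pcls_nn) (auto simp: less_imp_le)
        also have "\<dots> = (\<Sum>\<iota>\<in>Icls M np. p_cls M p \<iota> * F \<iota> (ys \<iota>)) + e' * (\<Sum>\<iota>\<in>Icls M np. p_cls M p \<iota>)"
          by (simp add: sum.distrib sum_distrib_left distrib_left mult.commute)
        also have "(\<Sum>\<iota>\<in>Icls M np. p_cls M p \<iota>) = 1" by (rule sum_p_cls[OF psum])
        also have "(\<Sum>\<iota>\<in>Icls M np. p_cls M p \<iota> * F \<iota> (ys \<iota>)) = Phi ys - \<mu> * G ys" unfolding Phi_G F_def ..
        finally show ?thesis using out by smt
      qed
      define QQ where "QQ \<iota> s0 z0 a0 b0 \<longleftrightarrow> s0 \<le> \<psi> \<iota> \<and> 0 \<le> s0 + (\<Sum>j<M. z0 j \<bullet> xt (\<upsilon> \<iota>) j) + cc * (\<Sum>l\<in>L. b0 l)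
         \<and> (\<forall>j<M. dual_norm nrm (z0 j) \<le> \<mu>)
         \<and> z0 = (\<lambda>j. if j < M then cc *\<^sub>R (\<Sum>l\<in>L. selT M N l (a0 l) j) else undefined)
         \<and> (\<forall>l\<in>L. ((\<lambda>k. if k < N then - a0 l k else undefined), - b0 l) \<in> H)"
        for \<iota> s0 and z0 :: "nat \<Rightarrow> real^'n" and a0 :: "(nat \<Rightarrow> nat) \<Rightarrow> nat \<Rightarrow> real^'n" and b0 :: "(nat \<Rightarrow> nat) \<Rightarrow> real"
      have ex: "\<forall>\<iota>\<in>Icls M np. \<exists>s. QQ \<iota> (fst s) (fst (snd s)) (fst (snd (snd s))) (snd (snd (snd s)))"
      proof
        fix \<iota> assume \<iota>: "\<iota> \<in> Icls M np"
        have "\<exists>\<sigma>0 z0 a0 b0. QQ \<iota> \<sigma>0 z0 a0 b0"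
          unfolding QQ_def by (rule inner[OF mu]) (use Fle[OF \<iota>] in \<open>auto simp: F_def\<close>)
        then obtain \<sigma>0 z0 a0 b0 where "QQ \<iota> \<sigma>0 z0 a0 b0" by blast
        then show "\<exists>s. QQ \<iota> (fst s) (fst (snd s)) (fst (snd (snd s))) (snd (snd (snd s)))"
          by (intro exI[of _ "(\<sigma>0, z0, a0, b0)"]) simp
      qed
      obtain g where g0: "\<forall>\<iota>\<in>Icls M np. QQ \<iota> (fst (g \<iota>)) (fst (snd (g \<iota>))) (fst (snd (snd (g \<iota>)))) (snd (snd (snd (g \<iota>))))"
        using bchoice[OF ex] by blast
      note g = g0[unfolded QQ_def]
      define \<sigma> where "\<sigma> \<iota> = fst (g \<iota>)" for \<iota>
      define z where "z \<iota> = fst (snd (g \<iota>))" for \<iota>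
      define a where "a l \<iota> = fst (snd (snd (g \<iota>))) l" for l \<iota>
      define b where "b l \<iota> = snd (snd (snd (g \<iota>))) l" for l \<iota>
      have inD: "ereal (\<mu> * real M * \<rho> + (\<Sum>\<iota>\<in>Icls M np. p_cls M p \<iota> * \<sigma> \<iota>)) \<in> D"
        unfolding D_def dual_values_def
      proof (intro CollectI exI conjI)
        show "ereal (\<mu> * real M * \<rho> + (\<Sum>\<iota>\<in>Icls M np. p_cls M p \<iota> * \<sigma> \<iota>)) = ereal (\<mu> * real M * \<rho> + (\<Sum>\<iota>\<in>Icls M np. p_cls M p \<iota> * \<sigma> \<iota>))" ..
        show "0 \<le> \<mu>" by (rule mu)
        show "\<forall>\<iota>\<in>Icls M np.
           0 \<le> \<sigma> \<iota> + (\<Sum>j<M. z \<iota> j \<bullet> xi_tuple M xi (\<upsilon> \<iota>) j)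
                 + (fact (M - N) / fact M) * (\<Sum>l\<in>Lset M N. b l \<iota>)
         \<and> (\<forall>j<M. dual_norm nrm (z \<iota> j) \<le> \<mu>)
         \<and> z \<iota> = (\<lambda>j. if j < M then (fact (M - N) / fact M) *\<^sub>R (\<Sum>l\<in>Lset M N. selT M N l (a l \<iota>) j)
                       else undefined)
         \<and> (\<forall>l\<in>Lset M N. ((\<lambda>k. if k < N then - a l \<iota> k else undefined), - b l \<iota>) \<in> H)"
          unfolding feas_unfold \<sigma>_def z_def a_def b_def using g by blast
      qed
      have "Inf D \<le> ereal (\<mu> * real M * \<rho> + (\<Sum>\<iota>\<in>Icls M np. p_cls M p \<iota> * \<sigma> \<iota>))"
        by (rule Inf_lower[OF inD])
      also have "\<dots> \<le> ereal (u + e)"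
      proof -
        have "(\<Sum>\<iota>\<in>Icls M np. p_cls M p \<iota> * \<sigma> \<iota>) \<le> (\<Sum>\<iota>\<in>Icls M np. p_cls M p \<iota> * \<psi> \<iota>)"
          using g unfolding \<sigma>_def by (intro sum_mono mult_left_mono pcls_nn) auto
        then show ?thesis using sumpsi unfolding e'_def by simp
      qed
      finally show "Inf D \<le> ereal u + ereal e" by simp
    qed
    then show ?thesis using real unfolding U_def D_def by simp
  qed
qed

theorem main_setting: "U_sym nrm M N \<rho> np p xi (loss N H) = Inf (dual_values nrm M N \<rho> np p xi H \<upsilon>)"
  using upper lower by (rule antisym)

end

theorem mainTheorem17:
  fixes nrm :: "real^'n \<Rightarrow> real"
    and M N np :: nat
    and \<rho> :: real
    and p :: "nat \<Rightarrow> real"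
    and xi :: "nat \<Rightarrow> real^'n"
    and H :: "((nat \<Rightarrow> real^'n) \<times> real) set"
    and \<upsilon> :: "(nat \<Rightarrow> nat) set \<Rightarrow> (nat \<Rightarrow> nat)"
  assumes "\<rho> > 0"
    and "1 \<le> N" and "N \<le> M"
    and "1 \<le> np" and "\<forall>i\<in>{1..np}. p i > 0" and "(\<Sum>i\<in>{1..np}. p i) = 1"
    and "is_norm nrm"
    and "is_polytope N H"
    and "\<forall>\<iota>\<in>Icls M np. \<upsilon> \<iota> \<in> \<iota>"
  shows "U_sym nrm M N \<rho> np p xi (loss N H) = Inf (dual_values nrm M N \<rho> np p xi H \<upsilon>)"
proof -
  obtain V where V: "finite V" "V \<noteq> {}" "V \<subseteq> blocks N \<times> UNIV"
    and HV: "H = {((\<lambda>k. if k < N then (\<Sum>v\<in>V. w v *\<^sub>R fst v k) else undefined),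
           (\<Sum>v\<in>V. w v * snd v)) | w. (\<forall>v\<in>V. 0 \<le> w v) \<and> (\<Sum>v\<in>V. w v) = 1}"
    using assms(8) unfolding is_polytope_def by blast
  interpret S: setting nrm M N np \<rho> p xi H \<upsilon> V
    by (unfold_locales) (use assms V HV in auto)
  show ?thesis by (rule S.main_setting)
qed

end
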